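(* Assume that $u_0\in C(\mathbb{R}^2\times S^1)$ and that there exists $S>0$ such that $u_0$ is constant on $\{(x,y,\theta)\in\mathbb{R}^2\times S^1 : x^2+y^2\ge S\}$. Let $u$ be a Lipschitz continuous vanishing viscosity solution, with initial datum $u_0$, of $$u_t=\sum_{i,j=1}^{2}\Big(\delta_{ij}-\frac{X_iu\,X_ju}{|\nabla_0u|^2}\Big)X_iX_ju \ \text{ in } \mathbb{R}^2\times S^1\times(0,\infty),\qquad u(\cdot,0)=u_0$$ (such as the one whose existence is guaranteed when $u_0$ is moreover Lipschitz). Then $u$ is a viscosity solution of this equation.
   Context: Points of $\mathbb{R}^2\times S^1$ are written $\xi=(x,y,\theta)$. Define the vector fields $X_1=\cos\theta\,\partial_x+\sin\theta\,\partial_y$, $X_2=\partial_\theta$, $X_3=-\sin\theta\,\partial_x+\cos\theta\,\partial_y$; $\nabla_0u=(X_1u,X_2u)$. For $\epsilon>0$ set $X^\epsilon_1=X_1$, $X^\epsilon_2=X_2$, $X^\epsilon_3=\epsilon X_3$, $\nabla_\epsilon u=(X^\epsilon_1u,X^\epsilon_2u,X^\epsilon_3u)$, and for $p\in\mathbb{R}^3$, $\tau,\sigma>0$, $A^{\epsilon,\tau,\sigma}_{ij}(p)=\delta_{ij}-\frac{p_ip_j}{|p|^2+\tau}+\sigma\delta_{ij}$. A vanishing viscosity solution is a (locally uniform) limit of a sequence of solutions $u^{\epsilon_k,\tau_k,\sigma_k}$ of $u_t=\sum_{i,j=1}^3A^{\epsilon_k,\tau_k,\sigma_k}_{ij}(\nabla_{\epsilon_k}u)X^{\epsilon_k}_iX^{\epsilon_k}_ju$,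 $u(\cdot,0)=u_0$, with $\epsilon_k,\tau_k,\sigma_k\to0$. A function $u\in C(\mathbb{R}^2\times S^1\times[0,\infty))$ is a viscosity subsolution if for every $(\xi,t)$ and every smooth $\phi$ such that $u-\phi$ has a local maximum at $(\xi,t)$: if $\nabla_0\phi(\xi,t)\ne0$ then $\partial_t\phi\le\sum_{i,j=1}^2\big(\delta_{ij}-\frac{X_i\phi X_j\phi}{|\nabla_0\phi|^2}\big)X_iX_j\phi$ at $(\xi,t)$; if $\nabla_0\phi(\xi,t)=0$ then $\partial_t\phi\le\sum_{i,j=1}^2(\delta_{ij}-\tilde p_i\tilde p_j)X_iX_j\phi$ at $(\xi,t)$ for some $\tilde p\in\mathbb{R}^2$ with $|\tilde p|\le1$. A viscosity supersolution is defined analogously with local minima and the reverse inequalities, and a viscosity solution is both. *)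

theory Defs
  imports "HOL-Analysis.Analysis"
begin

text \<open>Points of R^2 x S^1 x R are represented as quadruples (x, y, theta, t) of reals;
  S^1 is represented by its universal cover R, functions on R^2 x S^1 being those that are
  2 pi-periodic in theta.  Index convention for partial derivatives:
  0 = d/dx, 1 = d/dy, 2 = d/dtheta, 3 = d/dt.\<close>

type_synonym pt = "real \<times> real \<times> real \<times> real"

definition tc :: "pt \<Rightarrow> real" where "tc p = snd (snd (snd p))"
definition th :: "pt \<Rightarrow> real" where "th p = fst (snd (snd p))"

definition unitv :: "nat \<Rightarrow> pt" where
  "unitv i = (if i = 0 then 1 else 0, if i = 1 then 1 else 0,
              if i = 2 then 1 else 0, if i = 3 then 1 else 0)"

definition partial :: "nat \<Rightarrow> (pt \<Rightarrow> real) \<Rightarrow> pt \<Rightarrow> real" where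
  "partial i f p = deriv (\<lambda>s. f (p + s *\<^sub>R unitv i)) 0"

fun iter_partial :: "nat list \<Rightarrow> (pt \<Rightarrow> real) \<Rightarrow> pt \<Rightarrow> real" where
  "iter_partial [] f = f"
| "iter_partial (i # is) f = partial i (iter_partial is f)"

definition cont_partials :: "pt set \<Rightarrow> (pt \<Rightarrow> real) \<Rightarrow> nat list \<Rightarrow> bool" where
  "cont_partials S f is \<longleftrightarrow>
     (\<forall>j \<le> length is. continuous_on S (iter_partial (drop j is) f)) \<and>
     (\<forall>j < length is. \<forall>p \<in> S.
        (\<lambda>s. iter_partial (drop (Suc j) is) f (p + s *\<^sub>R unitv (is ! j))) differentiable (at 0))"

definition smooth_fun :: "(pt \<Rightarrow> real) \<Rightarrow> bool" where
  "smooth_fun f \<longleftrightarrow> (\<forall>is. set is \<subseteq> {0,1,2,3} \<longrightarrow> cont_partials UNIV f is)"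

definition C21_on :: "pt set \<Rightarrow> (pt \<Rightarrow> real) \<Rightarrow> bool" where
  "C21_on S f \<longleftrightarrow> (\<forall>is. set is \<subseteq> {0,1,2} \<and> length is \<le> 2 \<longrightarrow> cont_partials S f is)
                   \<and> cont_partials S f [3]"

definition VF :: "nat \<Rightarrow> (pt \<Rightarrow> real) \<Rightarrow> pt \<Rightarrow> real" where
  "VF i f = (\<lambda>p. if i = 1 then cos (th p) * partial 0 f p + sin (th p) * partial 1 f p
                 else if i = 2 then partial 2 f p
                 else - sin (th p) * partial 0 f p + cos (th p) * partial 1 f p)"

definition VFe :: "real \<Rightarrow> nat \<Rightarrow> (pt \<Rightarrow> real) \<Rightarrow> pt \<Rightarrow> real" where
  "VFe eps i f = (if i = 3 then (\<lambda>p. eps * VF 3 f p) else VF i f)"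

definition kdelta :: "nat \<Rightarrow> nat \<Rightarrow> real" where
  "kdelta i j = (if i = j then 1 else 0)"

definition Acoef :: "real \<Rightarrow> real \<Rightarrow> (nat \<Rightarrow> real) \<Rightarrow> nat \<Rightarrow> nat \<Rightarrow> real" where
  "Acoef tau sg P i j =
     kdelta i j - P i * P j / ((\<Sum>k\<in>{1,2,3}. (P k)\<^sup>2) + tau) + sg * kdelta i j"

definition reg_solution ::
  "real \<Rightarrow> real \<Rightarrow> real \<Rightarrow> (real \<times> real \<times> real \<Rightarrow> real) \<Rightarrow> (pt \<Rightarrow> real) \<Rightarrow> bool" where
  "reg_solution eps tau sg u0 U \<longleftrightarrow>
     continuous_on {p. tc p \<ge> 0} U \<and>
     (\<forall>x y z t. U (x, y, z + 2 * pi, t) = U (x, y, z, t)) \<and>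
     C21_on {p. tc p > 0} U \<and>
     (\<forall>p. tc p > 0 \<longrightarrow>
        partial 3 U p =
          (\<Sum>i\<in>{1,2,3}. \<Sum>j\<in>{1,2,3}.
             Acoef tau sg (\<lambda>k. VFe eps k U p) i j * VFe eps i (VFe eps j U) p)) \<and>
     (\<forall>x y z. U (x, y, z, 0) = u0 (x, y, z))"

definition vanishing_viscosity_solution ::
  "(real \<times> real \<times> real \<Rightarrow> real) \<Rightarrow> (pt \<Rightarrow> real) \<Rightarrow> bool" where
  "vanishing_viscosity_solution u0 u \<longleftrightarrow>
     (\<exists>eps tau sg :: nat \<Rightarrow> real. \<exists>U :: nat \<Rightarrow> pt \<Rightarrow> real.
        (\<forall>k. eps k > 0 \<and> tau k > 0 \<and> sg k > 0) \<and>
        eps \<longlonglongrightarrow> 0 \<and> tau \<longlonglongrightarrow> 0 \<and> sg \<longlonglongrightarrow> 0 \<and>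
        (\<forall>k. reg_solution (eps k) (tau k) (sg k) u0 (U k)) \<and>
        (\<forall>K. compact K \<and> K \<subseteq> {p. tc p \<ge> 0} \<longrightarrow> uniform_limit K U u sequentially))"

definition grad0_sq :: "(pt \<Rightarrow> real) \<Rightarrow> pt \<Rightarrow> real" where
  "grad0_sq f p = (VF 1 f p)\<^sup>2 + (VF 2 f p)\<^sup>2"

definition mc_op :: "(pt \<Rightarrow> real) \<Rightarrow> pt \<Rightarrow> real" where
  "mc_op f p = (\<Sum>i\<in>{1,2}. \<Sum>j\<in>{1,2}.
                 (kdelta i j - VF i f p * VF j f p / grad0_sq f p) * VF i (VF j f) p)"

definition deg_op :: "(nat \<Rightarrow> real) \<Rightarrow> (pt \<Rightarrow> real) \<Rightarrow> pt \<Rightarrow> real" where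
  "deg_op q f p = (\<Sum>i\<in>{1,2}. \<Sum>j\<in>{1,2}. (kdelta i j - q i * q j) * VF i (VF j f) p)"

definition viscosity_subsolution :: "(pt \<Rightarrow> real) \<Rightarrow> bool" where
  "viscosity_subsolution u \<longleftrightarrow>
     continuous_on {p. tc p \<ge> 0} u \<and>
     (\<forall>p phi. tc p > 0 \<and> smooth_fun phi \<and>
        (\<exists>r>0. \<forall>q. dist q p < r \<and> tc q > 0 \<longrightarrow> u q - phi q \<le> u p - phi p) \<longrightarrow>
        (grad0_sq phi p \<noteq> 0 \<longrightarrow> partial 3 phi p \<le> mc_op phi p) \<and>
        (grad0_sq phi p = 0 \<longrightarrow>
           (\<exists>q. sqrt ((q 1)\<^sup>2 + (q 2)\<^sup>2) \<le> 1 \<and> partial 3 phi p \<le> deg_op q phi p)))"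

definition viscosity_supersolution :: "(pt \<Rightarrow> real) \<Rightarrow> bool" where
  "viscosity_supersolution u \<longleftrightarrow>
     continuous_on {p. tc p \<ge> 0} u \<and>
     (\<forall>p phi. tc p > 0 \<and> smooth_fun phi \<and>
        (\<exists>r>0. \<forall>q. dist q p < r \<and> tc q > 0 \<longrightarrow> u q - phi q \<ge> u p - phi p) \<longrightarrow>
        (grad0_sq phi p \<noteq> 0 \<longrightarrow> partial 3 phi p \<ge> mc_op phi p) \<and>
        (grad0_sq phi p = 0 \<longrightarrow>
           (\<exists>q. sqrt ((q 1)\<^sup>2 + (q 2)\<^sup>2) \<le> 1 \<and> partial 3 phi p \<ge> deg_op q phi p)))"

definition viscosity_solution :: "(pt \<Rightarrow> real) \<Rightarrow> bool" where
  "viscosity_solution u \<longleftrightarrow> viscosity_subsolution u \<and> viscosity_supersolution u"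

end

theory Submission
  imports Defs
begin


lemma uv: "unitv 0 = (1,0,0,0)" "unitv 1 = (0,1,0,0)" "unitv 2 = (0,0,1,0)" "unitv 3 = (0,0,0,1)"
  by (simp_all add: unitv_def)

lemma slice_pt:
  "(x,y,z,t) + s *\<^sub>R unitv 0 = (x+s,y,z,t)"
  "(x,y,z,t) + s *\<^sub>R unitv 1 = (x,y+s,z,t)"
  "(x,y,z,t) + s *\<^sub>R unitv 2 = (x,y,z+s,t)"
  "(x,y,z,t) + s *\<^sub>R unitv 3 = (x,y,z,t+s)"
  by (simp_all add: unitv_def)

lemma shift_deriv:
  assumes "(\<lambda>s. G (x + s)) differentiable (at 0)"
  shows "(G has_real_derivative deriv (\<lambda>s. G (x + s)) 0) (at x)"
proof -
  have e: "(\<lambda>s. G (x + s)) = (\<lambda>s. G (s + x))" by (simp add: add.commute)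
  have "((\<lambda>s. G (s + x)) has_real_derivative deriv (\<lambda>s. G (x + s)) 0) (at 0)"
    using assms DERIV_deriv_iff_real_differentiable e by metis
  then show ?thesis using DERIV_shift[of G _ 0 x] by simp
qed

lemma d0:
  assumes "(\<lambda>s. F ((x,y,z,t) + s *\<^sub>R unitv 0)) differentiable (at 0)"
  shows "((\<lambda>s. F (s,y,z,t)) has_real_derivative partial 0 F (x,y,z,t)) (at x)"
  using shift_deriv[of "\<lambda>s. F (s,y,z,t)" x] assms
  by (simp only: partial_def slice_pt)

lemma d1:
  assumes "(\<lambda>s. F ((x,y,z,t) + s *\<^sub>R unitv 1)) differentiable (at 0)"
  shows "((\<lambda>s. F (x,s,z,t)) has_real_derivative partial 1 F (x,y,z,t)) (at y)"
  using shift_deriv[of "\<lambda>s. F (x,s,z,t)" y] assms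
  by (simp only: partial_def slice_pt)

lemma d2:
  assumes "(\<lambda>s. F ((x,y,z,t) + s *\<^sub>R unitv 2)) differentiable (at 0)"
  shows "((\<lambda>s. F (x,y,s,t)) has_real_derivative partial 2 F (x,y,z,t)) (at z)"
  using shift_deriv[of "\<lambda>s. F (x,y,s,t)" z] assms
  by (simp only: partial_def slice_pt)

lemma d3:
  assumes "(\<lambda>s. F ((x,y,z,t) + s *\<^sub>R unitv 3)) differentiable (at 0)"
  shows "((\<lambda>s. F (x,y,z,s)) has_real_derivative partial 3 F (x,y,z,t)) (at t)"
  using shift_deriv[of "\<lambda>s. F (x,y,z,s)" t] assms
  by (simp only: partial_def slice_pt)

lemma mvt_sym:
  fixes g :: "real \<Rightarrow> real"
  assumes der: "\<And>\<theta>. \<bar>\<theta>\<bar> \<le> \<bar>h\<bar> \<Longrightarrow> (g has_real_derivative g' \<theta>) (at \<theta>)"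
  shows "\<exists>\<theta>. \<bar>\<theta>\<bar> \<le> \<bar>h\<bar> \<and> g h - g 0 = h * g' \<theta>"
proof (cases "h = 0")
  case True then show ?thesis by (intro exI[of _ 0]) simp
next
  case False
  show ?thesis
  proof (cases "h > 0")
    case True
    from MVT2[of 0 h g g'] True der obtain z where "0 < z" "z < h" "g h - g 0 = (h - 0) * g' z"
      by auto
    then show ?thesis by (intro exI[of _ z]) auto
  next
    case False
    with \<open>h \<noteq> 0\<close> have "h < 0" by simp
    from MVT2[of h 0 g g'] this der obtain z where "h < z" "z < 0" "g 0 - g h = (0 - h) * g' z"
      by auto
    then show ?thesis by (intro exI[of _ z]) (auto simp: algebra_simps)
  qed
qed



lemma dist4: "dist (a1::real,a2::real,a3::real,a4::real) (b1,b2,b3,b4) =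
   sqrt ((a1-b1)\<^sup>2 + (a2-b2)\<^sup>2 + (a3-b3)\<^sup>2 + (a4-b4)\<^sup>2)"
  by (simp add: dist_prod_def dist_real_def add.assoc)

lemma dist_pair_le: "dist (a,b) (c,d) \<le> dist a c + dist b d"
  unfolding dist_prod_def
  using sqrt_sum_squares_le_sum_abs[of "dist a c" "dist b d"] by simp

lemma dist4_le: "dist (a1::real,a2::real,a3::real,a4::real) (b1,b2,b3,b4) \<le>
   \<bar>a1-b1\<bar> + \<bar>a2-b2\<bar> + \<bar>a3-b3\<bar> + \<bar>a4-b4\<bar>"
proof -
  have "dist (a1,a2,a3,a4) (b1,b2,b3,b4) \<le> dist a1 b1 + dist (a2,a3,a4) (b2,b3,b4)" by (rule dist_pair_le)
  also have "dist (a2,a3,a4) (b2,b3,b4) \<le> dist a2 b2 + dist (a3,a4) (b3,b4)" by (rule dist_pair_le)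
  also have "dist (a3,a4) (b3,b4) \<le> dist a3 b3 + dist a4 b4" by (rule dist_pair_le)
  finally show ?thesis by (simp add: dist_real_def)
qed

lemma dshift1:
  assumes "(\<lambda>s. F ((x,y+\<theta>,z,t) + s *\<^sub>R unitv 1)) differentiable (at 0)"
  shows "((\<lambda>\<theta>. F (x,y+\<theta>,z,t)) has_real_derivative partial 1 F (x,y+\<theta>,z,t)) (at \<theta>)"
proof -
  have h: "((\<lambda>s. F (x,s,z,t)) has_real_derivative partial 1 F (x,y+\<theta>,z,t)) (at ((\<lambda>\<theta>. y+\<theta>) \<theta>))"
    using d1[OF assms] by simp
  have g: "((\<lambda>\<theta>. y+\<theta>) has_real_derivative 1) (at \<theta>)" by (auto intro!: derivative_eq_intros)
  show ?thesis using DERIV_chain2[OF h g] by simp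
qed

lemma dshift0:
  assumes "(\<lambda>s. F ((x+\<theta>,y,z,t) + s *\<^sub>R unitv 0)) differentiable (at 0)"
  shows "((\<lambda>\<theta>. F (x+\<theta>,y,z,t)) has_real_derivative partial 0 F (x+\<theta>,y,z,t)) (at \<theta>)"
proof -
  have h: "((\<lambda>s. F (s,y,z,t)) has_real_derivative partial 0 F (x+\<theta>,y,z,t)) (at ((\<lambda>\<theta>. x+\<theta>) \<theta>))"
    using d0[OF assms] by simp
  have g: "((\<lambda>\<theta>. x+\<theta>) has_real_derivative 1) (at \<theta>)" by (auto intro!: derivative_eq_intros)
  show ?thesis using DERIV_chain2[OF h g] by simp
qed

lemma lim_abs_mult: "((\<lambda>s::real. \<bar>s * b\<bar>) \<longlongrightarrow> 0) (at 0)"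
proof -
  have "((\<lambda>s::real. \<bar>s * b\<bar>) \<longlongrightarrow> \<bar>0 * b\<bar>) (at 0)"
    by (intro tendsto_intros)
  then show ?thesis by simp
qed



lemma dirderiv:
  fixes F :: "pt \<Rightarrow> real"
  assumes dpos: "\<delta> > 0"
  and sl0: "\<And>q. dist q (x,y,z,t) < \<delta> \<Longrightarrow> (\<lambda>s. F (q + s *\<^sub>R unitv 0)) differentiable (at 0)"
  and sl1: "\<And>q. dist q (x,y,z,t) < \<delta> \<Longrightarrow> (\<lambda>s. F (q + s *\<^sub>R unitv 1)) differentiable (at 0)"
  and sl2: "(\<lambda>s. F ((x,y,z,t) + s *\<^sub>R unitv 2)) differentiable (at 0)"
  and c0: "isCont (partial 0 F) (x,y,z,t)"
  and c1: "isCont (partial 1 F) (x,y,z,t)"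
  shows "((\<lambda>s. F (x + s*a, y + s*b, z + s*c, t)) has_real_derivative
          (a * partial 0 F (x,y,z,t) + b * partial 1 F (x,y,z,t) + c * partial 2 F (x,y,z,t))) (at 0)"
proof -
  define M where "M = \<bar>a\<bar> + \<bar>b\<bar> + \<bar>c\<bar> + 1"
  have Mpos: "M > 0" unfolding M_def by (smt (verit) abs_ge_zero)
  define \<eta> where "\<eta> = \<delta> / M"
  have etapos: "\<eta> > 0" using dpos Mpos by (simp add: \<eta>_def)
  have small: "\<bar>s\<bar> * M < \<delta>" if "\<bar>s\<bar> < \<eta>" for s
    using that Mpos by (simp add: \<eta>_def pos_less_divide_eq)
  have absb: "\<bar>s\<bar> * \<bar>a\<bar> + \<bar>s\<bar> * \<bar>b\<bar> + \<bar>s\<bar> * \<bar>c\<bar> \<le> \<bar>s\<bar> * M" for s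
    unfolding M_def by (simp add: algebra_simps)
  have ev: "\<forall>\<^sub>F s in at (0::real). \<bar>s\<bar> < \<eta> \<and> s \<noteq> 0"
    by (auto simp: eventually_at dist_real_def intro!: exI[of _ \<eta>] etapos)
  define g2 where "g2 s = F (x, y, z + s*c, t)" for s
  define g1 where "g1 s = F (x, y + s*b, z + s*c, t) - F (x, y, z+s*c, t)" for s
  define g0 where "g0 s = F (x + s*a, y+s*b, z+s*c, t) - F (x, y+s*b, z+s*c, t)" for s
  have eq: "(\<lambda>s. F (x + s*a, y + s*b, z + s*c, t)) = (\<lambda>s. g0 s + g1 s + g2 s)"
    by (simp add: g0_def g1_def g2_def fun_eq_iff)
  have D2: "(g2 has_real_derivative c * partial 2 F (x,y,z,t)) (at 0)"
  proof -
    have h: "((\<lambda>u. F (x,y,u,t)) has_real_derivative partial 2 F (x,y,z,t)) (at ((\<lambda>s. z + s*c) 0))"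
      using d2[OF sl2] by simp
    have g: "((\<lambda>s. z + s*c) has_real_derivative c) (at 0)" by (auto intro!: derivative_eq_intros)
    have e: "g2 = (\<lambda>s. F (x, y, z + s*c, t))" by (simp add: g2_def fun_eq_iff)
    from DERIV_chain2[OF h g] show ?thesis unfolding e by (simp add: mult.commute)
  qed
  have ex1: "\<exists>\<theta>. \<bar>\<theta>\<bar> \<le> \<bar>s*b\<bar> \<and> g1 s = (s*b) * partial 1 F (x, y+\<theta>, z+s*c, t)"
    if s: "\<bar>s\<bar> < \<eta>" for s
  proof -
    have "\<exists>\<theta>. \<bar>\<theta>\<bar> \<le> \<bar>s*b\<bar> \<and> (\<lambda>\<theta>. F (x, y+\<theta>, z+s*c, t)) (s*b) - (\<lambda>\<theta>. F (x, y+\<theta>, z+s*c, t)) 0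
            = (s*b) * partial 1 F (x, y+\<theta>, z+s*c,t)"
    proof (rule mvt_sym)
      fix \<theta> assume th: "\<bar>\<theta>\<bar> \<le> \<bar>s*b\<bar>"
      have "dist (x, y+\<theta>, z+s*c, t) (x,y,z,t) \<le> \<bar>\<theta>\<bar> + \<bar>s*c\<bar>"
        using dist4_le[of x "y+\<theta>" "z+s*c" t x y z t] by simp
      also have "\<dots> \<le> \<bar>s\<bar> * M" using th absb[of s] abs_ge_zero[of "s*a"] unfolding abs_mult by linarith
      finally have "dist (x, y+\<theta>, z+s*c, t) (x,y,z,t) < \<delta>" using small[OF s] by linarith
      then show "((\<lambda>\<theta>. F (x, y+\<theta>, z+s*c, t)) has_real_derivative partial 1 F (x, y+\<theta>, z+s*c, t)) (at \<theta>)"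
        by (intro dshift1 sl1) simp
    qed
    then show ?thesis by (simp add: g1_def)
  qed
  define \<Theta> where "\<Theta> s = (SOME \<theta>. \<bar>\<theta>\<bar> \<le> \<bar>s*b\<bar> \<and> g1 s = (s*b) * partial 1 F (x, y+\<theta>, z+s*c, t))" for s
  have Th: "\<bar>\<Theta> s\<bar> \<le> \<bar>s*b\<bar> \<and> g1 s = (s*b) * partial 1 F (x, y+\<Theta> s, z+s*c, t)" if "\<bar>s\<bar> < \<eta>" for s
    unfolding \<Theta>_def by (rule someI_ex) (rule ex1[OF that])
  have "(\<Theta> \<longlongrightarrow> 0) (at 0)"
    apply (rule Lim_null_comparison[OF _ lim_abs_mult[of b]])
    using ev by eventually_elim (simp add: Th)
  then have "((\<lambda>s. (x, y + \<Theta> s, z + s*c, t)) \<longlongrightarrow> (x, y + 0, z + 0*c, t)) (at 0)"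
    by (intro tendsto_intros)
  then have "((\<lambda>s. (x, y + \<Theta> s, z + s*c, t)) \<longlongrightarrow> (x, y, z, t)) (at 0)" by simp
  from isCont_tendsto_compose[OF c1 this]
  have L1: "((\<lambda>s. partial 1 F (x, y + \<Theta> s, z+s*c, t)) \<longlongrightarrow> partial 1 F (x,y,z,t)) (at 0)" .
  have D1: "(g1 has_real_derivative b * partial 1 F (x,y,z,t)) (at 0)"
    unfolding has_field_derivative_iff
  proof (rule Lim_transform_eventually)
    show "((\<lambda>s. b * partial 1 F (x, y+\<Theta> s, z+s*c,t)) \<longlongrightarrow> b * partial 1 F (x,y,z,t)) (at 0)"
      using L1 by (intro tendsto_intros)
    show "\<forall>\<^sub>F s in at 0. b * partial 1 F (x, y+\<Theta> s, z+s*c,t) = (g1 s - g1 0)/(s - 0)"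
      using ev proof eventually_elim
      case (elim s)
      have "g1 0 = 0" by (simp add: g1_def)
      with Th[of s] elim show ?case by (simp add: field_simps)
    qed
  qed
  have ex0: "\<exists>\<theta>. \<bar>\<theta>\<bar> \<le> \<bar>s*a\<bar> \<and> g0 s = (s*a) * partial 0 F (x+\<theta>, y+s*b, z+s*c, t)"
    if s: "\<bar>s\<bar> < \<eta>" for s
  proof -
    have "\<exists>\<theta>. \<bar>\<theta>\<bar> \<le> \<bar>s*a\<bar> \<and> (\<lambda>\<theta>. F (x+\<theta>, y+s*b, z+s*c, t)) (s*a) - (\<lambda>\<theta>. F (x+\<theta>, y+s*b, z+s*c, t)) 0
            = (s*a) * partial 0 F (x+\<theta>, y+s*b, z+s*c,t)"
    proof (rule mvt_sym)
      fix \<theta> assume th: "\<bar>\<theta>\<bar> \<le> \<bar>s*a\<bar>"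
      have "dist (x+\<theta>, y+s*b, z+s*c, t) (x,y,z,t) \<le> \<bar>\<theta>\<bar> + \<bar>s*b\<bar> + \<bar>s*c\<bar>"
        using dist4_le[of "x+\<theta>" "y+s*b" "z+s*c" t x y z t] by simp
      also have "\<dots> \<le> \<bar>s\<bar> * M" using th absb[of s] unfolding abs_mult by linarith
      finally have "dist (x+\<theta>, y+s*b, z+s*c, t) (x,y,z,t) < \<delta>" using small[OF s] by linarith
      then show "((\<lambda>\<theta>. F (x+\<theta>, y+s*b, z+s*c, t)) has_real_derivative partial 0 F (x+\<theta>, y+s*b, z+s*c, t)) (at \<theta>)"
        by (intro dshift0 sl0) simp
    qed
    then show ?thesis by (simp add: g0_def)
  qed
  define \<Phi> where "\<Phi> s = (SOME \<theta>. \<bar>\<theta>\<bar> \<le> \<bar>s*a\<bar> \<and> g0 s = (s*a) * partial 0 F (x+\<theta>, y+s*b, z+s*c, t))" for s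
  have Ph: "\<bar>\<Phi> s\<bar> \<le> \<bar>s*a\<bar> \<and> g0 s = (s*a) * partial 0 F (x+\<Phi> s, y+s*b, z+s*c, t)" if "\<bar>s\<bar> < \<eta>" for s
    unfolding \<Phi>_def by (rule someI_ex) (rule ex0[OF that])
  have "(\<Phi> \<longlongrightarrow> 0) (at 0)"
    apply (rule Lim_null_comparison[OF _ lim_abs_mult[of a]])
    using ev by eventually_elim (simp add: Ph)
  then have "((\<lambda>s. (x + \<Phi> s, y + s*b, z + s*c, t)) \<longlongrightarrow> (x + 0, y + 0*b, z + 0*c, t)) (at 0)"
    by (intro tendsto_intros)
  then have "((\<lambda>s. (x + \<Phi> s, y + s*b, z + s*c, t)) \<longlongrightarrow> (x, y, z, t)) (at 0)" by simp
  from isCont_tendsto_compose[OF c0 this]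
  have L0: "((\<lambda>s. partial 0 F (x + \<Phi> s, y+s*b, z+s*c, t)) \<longlongrightarrow> partial 0 F (x,y,z,t)) (at 0)" .
  have D0: "(g0 has_real_derivative a * partial 0 F (x,y,z,t)) (at 0)"
    unfolding has_field_derivative_iff
  proof (rule Lim_transform_eventually)
    show "((\<lambda>s. a * partial 0 F (x+\<Phi> s, y+s*b, z+s*c,t)) \<longlongrightarrow> a * partial 0 F (x,y,z,t)) (at 0)"
      using L0 by (intro tendsto_intros)
    show "\<forall>\<^sub>F s in at 0. a * partial 0 F (x+\<Phi> s, y+s*b, z+s*c,t) = (g0 s - g0 0)/(s - 0)"
      using ev proof eventually_elim
      case (elim s)
      have "g0 0 = 0" by (simp add: g0_def)
      with Ph[of s] elim show ?case by (simp add: field_simps)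
    qed
  qed
  show ?thesis unfolding eq
    using DERIV_add[OF DERIV_add[OF D0 D1] D2] by simp
qed



lemma norm_unitv: "norm (unitv a) \<le> 1"
  unfolding unitv_def by (auto simp: norm_Pair)

lemma dist_slice: "dist (p + s *\<^sub>R unitv a) p \<le> \<bar>s\<bar>"
proof -
  have "dist (p + s *\<^sub>R unitv a) p = \<bar>s\<bar> * norm (unitv a)" by (simp add: dist_norm)
  also have "\<dots> \<le> \<bar>s\<bar>" using norm_unitv[of a] by (simp add: mult_left_le)
  finally show ?thesis .
qed

lemma grad_zero:
  fixes f :: "pt \<Rightarrow> real"
  assumes dpos: "\<delta> > 0"
  and maxf: "\<And>q. dist q p < \<delta> \<Longrightarrow> f q \<le> f p"
  and sl: "(\<lambda>s. f (p + s *\<^sub>R unitv a)) differentiable (at 0)"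
  shows "partial a f p = 0"
proof -
  have D: "((\<lambda>s. f (p + s *\<^sub>R unitv a)) has_real_derivative partial a f p) (at 0)"
    using sl DERIV_deriv_iff_real_differentiable unfolding partial_def by blast
  show ?thesis
  proof (rule DERIV_local_max[OF D dpos], intro allI impI)
    fix s :: real assume "\<bar>0 - s\<bar> < \<delta>"
    then have "dist (p + s *\<^sub>R unitv a) p < \<delta>" using dist_slice[of p s a] by simp
    then show "f (p + s *\<^sub>R unitv a) \<le> f (p + 0 *\<^sub>R unitv a)" using maxf by simp
  qed
qed



lemma max2:
  fixes f :: "pt \<Rightarrow> real" and x y z t a b c :: real
  defines "p \<equiv> (x,y,z,t)"
  assumes dpos: "\<delta> > 0"
  and maxf: "\<And>q. dist q p < \<delta> \<Longrightarrow> f q \<le> f p"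
  and sl: "\<And>q i. dist q p < \<delta> \<Longrightarrow> i < 3 \<Longrightarrow> (\<lambda>s. f (q + s *\<^sub>R unitv i)) differentiable (at 0)"
  and sl2: "\<And>q i j. dist q p < \<delta> \<Longrightarrow> i < 3 \<Longrightarrow> j < 3 \<Longrightarrow> (\<lambda>s. partial i f (q + s *\<^sub>R unitv j)) differentiable (at 0)"
  and c1: "\<And>q i. dist q p < \<delta> \<Longrightarrow> i < 3 \<Longrightarrow> isCont (partial i f) q"
  and c2: "\<And>i j. i < 3 \<Longrightarrow> j < 3 \<Longrightarrow> isCont (partial j (partial i f)) p"
  shows "a * (a * partial 0 (partial 0 f) p + b * partial 1 (partial 0 f) p + c * partial 2 (partial 0 f) p)
       + b * (a * partial 0 (partial 1 f) p + b * partial 1 (partial 1 f) p + c * partial 2 (partial 1 f) p)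
       + c * (a * partial 0 (partial 2 f) p + b * partial 1 (partial 2 f) p + c * partial 2 (partial 2 f) p) \<le> 0"
    (is "?Q \<le> 0")
proof (rule ccontr)
  assume "\<not> ?Q \<le> 0"
  then have Qpos: "?Q > 0" by simp
  define M where "M = \<bar>a\<bar> + \<bar>b\<bar> + \<bar>c\<bar> + 1"
  have Mpos: "M > 0" unfolding M_def by (smt (verit) abs_ge_zero)
  define \<eta> where "\<eta> = \<delta> / M"
  have etapos: "\<eta> > 0" using dpos Mpos by (simp add: \<eta>_def)
  have small: "\<bar>s\<bar> * M < \<delta>" if "\<bar>s\<bar> < \<eta>" for s
    using that Mpos by (simp add: \<eta>_def pos_less_divide_eq)
  define P where "P s = (x+s*a, y+s*b, z+s*c, t)" for s
  have distP: "dist (P s) p \<le> \<bar>s\<bar> * M" for s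
  proof -
    have "dist (P s) p \<le> \<bar>s*a\<bar> + \<bar>s*b\<bar> + \<bar>s*c\<bar>"
      using dist4_le[of "x+s*a" "y+s*b" "z+s*c" t x y z t] by (simp add: P_def p_def)
    also have "\<dots> \<le> \<bar>s\<bar> * M" unfolding M_def abs_mult by (simp add: algebra_simps)
    finally show ?thesis .
  qed
  have Pin: "dist (P s) p < \<delta>" if "\<bar>s\<bar> < \<eta>" for s
    using distP[of s] small[OF that] by linarith
  define hp where "hp s = a * partial 0 f (P s) + b * partial 1 f (P s) + c * partial 2 f (P s)" for s
  have Dh: "((\<lambda>s. f (P s)) has_real_derivative hp s) (at s)" if s: "\<bar>s\<bar> < \<eta>" for s
  proof -
    define d' where "d' = \<delta> - dist (P s) p"
    have d'pos: "d' > 0" using Pin[OF s] by (simp add: d'_def)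
    have inball: "dist q p < \<delta>" if "dist q (P s) < d'" for q
      using that dist_triangle[of q p "P s"] by (simp add: d'_def)
    have Ps: "P s = (x+s*a, y+s*b, z+s*c, t)" by (simp add: P_def)
    have "((\<lambda>u. f (x+s*a + u*a, y+s*b + u*b, z+s*c + u*c, t)) has_real_derivative
          (a * partial 0 f (P s) + b * partial 1 f (P s) + c * partial 2 f (P s))) (at 0)"
      unfolding Ps
    proof (rule dirderiv[OF d'pos])
      fix q assume "dist q (x+s*a, y+s*b, z+s*c, t) < d'"
      then have "dist q p < \<delta>" using inball Ps by simp
      then show "(\<lambda>u. f (q + u *\<^sub>R unitv 0)) differentiable (at 0)"
        and "(\<lambda>u. f (q + u *\<^sub>R unitv 1)) differentiable (at 0)" using sl by auto
    next
      show "(\<lambda>u. f ((x+s*a, y+s*b, z+s*c, t) + u *\<^sub>R unitv 2)) differentiable (at 0)"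
        using sl[of "P s" 2] Pin[OF s] Ps by simp
      show "isCont (partial 0 f) (x+s*a, y+s*b, z+s*c, t)"
        and "isCont (partial 1 f) (x+s*a, y+s*b, z+s*c, t)"
        using c1[of "P s"] Pin[OF s] Ps by auto
    qed
    moreover have "(\<lambda>u. f (x+s*a + u*a, y+s*b + u*b, z+s*c + u*c, t)) = (\<lambda>u. f (P (u + s)))"
      by (simp add: P_def fun_eq_iff algebra_simps)
    ultimately have "((\<lambda>u. f (P (u + s))) has_real_derivative hp s) (at 0)" by (simp add: hp_def)
    then show ?thesis using DERIV_shift[of "\<lambda>s. f (P s)" "hp s" 0 s] by simp
  qed
  have hp0: "hp 0 = 0"
  proof (rule DERIV_local_max[OF Dh[of 0] etapos], simp add: etapos, intro allI impI)
    fix s :: real assume "\<bar>0 - s\<bar> < \<eta>"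
    then have "dist (P s) p < \<delta>" using Pin by simp
    then show "f (P s) \<le> f (P 0)" using maxf by (simp add: P_def p_def)
  qed
  have Dhp: "(hp has_real_derivative ?Q) (at 0)"
  proof -
    have Di: "((\<lambda>s. partial i f (P s)) has_real_derivative
       a * partial 0 (partial i f) p + b * partial 1 (partial i f) p + c * partial 2 (partial i f) p) (at 0)"
      if i: "i < 3" for i
      unfolding P_def p_def
    proof (rule dirderiv[OF dpos])
      fix q assume "dist q (x, y, z, t) < \<delta>"
      then show "(\<lambda>u. partial i f (q + u *\<^sub>R unitv 0)) differentiable (at 0)"
        and "(\<lambda>u. partial i f (q + u *\<^sub>R unitv 1)) differentiable (at 0)"
        using sl2 i by (auto simp: p_def)
    next
      show "(\<lambda>u. partial i f ((x, y, z, t) + u *\<^sub>R unitv 2)) differentiable (at 0)"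
        using sl2[of p i 2] i dpos by (simp add: p_def)
      show "isCont (partial 0 (partial i f)) (x, y, z, t)"
        and "isCont (partial 1 (partial i f)) (x, y, z, t)"
        using c2 i by (auto simp: p_def)
    qed
    have e: "hp = (\<lambda>s. a * partial 0 f (P s) + b * partial 1 f (P s) + c * partial 2 f (P s))"
      by (simp add: hp_def fun_eq_iff)
    show ?thesis unfolding e
      by (intro DERIV_add DERIV_cmult Di) simp_all
  qed
  have "((\<lambda>s. (hp s - hp 0) / (s - 0)) \<longlongrightarrow> ?Q) (at 0)"
    using Dhp unfolding has_field_derivative_iff .
  from order_tendstoD(1)[OF this Qpos]
  have "\<forall>\<^sub>F s in at 0. 0 < (hp s - hp 0) / (s - 0)" .
  then obtain d where dd: "d > 0" and dprop: "\<And>s. s \<noteq> 0 \<Longrightarrow> dist s 0 < d \<Longrightarrow> 0 < hp s / s"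
    unfolding eventually_at using hp0 by auto
  define s0 where "s0 = min d \<eta> / 2"
  have s0: "0 < s0" "s0 < d" "s0 < \<eta>" using dd etapos by (auto simp: s0_def)
  obtain w where w: "0 < w" "w < s0" "f (P s0) - f (P 0) = (s0 - 0) * hp w"
    using MVT2[of 0 s0 "\<lambda>s. f (P s)" hp] s0 Dh by force
  have "0 < hp w / w" using dprop[of w] w s0 by (simp add: dist_real_def)
  then have "0 < hp w" using w by (simp add: zero_less_divide_iff)
  then have "s0 * hp w > 0" using s0 by simp
  then have "f (P s0) > f (P 0)" using w by simp
  moreover have "f (P s0) \<le> f p" using maxf Pin[of s0] s0 by simp
  moreover have "P 0 = p" by (simp add: P_def p_def)
  ultimately show False by simp
qed



lemma th_pt[simp]: "th (x,y,z,t) = z" by (simp add: th_def)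
lemma tc_pt[simp]: "tc (x,y,z,t) = t" by (simp add: tc_def)

lemma slice_has_deriv:
  "(\<lambda>s. F (p + s *\<^sub>R unitv k)) differentiable (at 0) \<Longrightarrow>
   ((\<lambda>s. F (p + s *\<^sub>R unitv k)) has_real_derivative partial k F p) (at 0)"
  unfolding partial_def using DERIV_deriv_iff_real_differentiable by blast

lemma th_slice: "th (p + s *\<^sub>R unitv k) = th p + (if k = 2 then s else 0)"
  by (cases p) (auto simp: th_def unitv_def)

lemma partial_comb:
  fixes A B :: "real \<Rightarrow> real"
  assumes dA: "(A has_real_derivative A') (at (th p))" and dB: "(B has_real_derivative B') (at (th p))"
  and dF: "(\<lambda>s. F (p + s *\<^sub>R unitv k)) differentiable (at 0)"
  and dG: "(\<lambda>s. G (p + s *\<^sub>R unitv k)) differentiable (at 0)"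
  shows "partial k (\<lambda>q. A (th q) * F q + B (th q) * G q) p =
    (if k = 2 then A' * F p + A (th p) * partial k F p + B' * G p + B (th p) * partial k G p
     else A (th p) * partial k F p + B (th p) * partial k G p)"
proof (cases "k = 2")
  case True
  have e: "(\<lambda>s. A (th (p + s *\<^sub>R unitv k)) * F (p + s *\<^sub>R unitv k) + B (th (p + s *\<^sub>R unitv k)) * G (p + s *\<^sub>R unitv k))
     = (\<lambda>s. A (th p + s) * F (p + s *\<^sub>R unitv k) + B (th p + s) * G (p + s *\<^sub>R unitv k))"
    using True by (simp add: th_slice)
  have dA': "((\<lambda>s. A (th p + s)) has_real_derivative A') (at 0)"
    using dA DERIV_shift[of A A' 0 "th p"] by (simp add: add.commute)
  have dB': "((\<lambda>s. B (th p + s)) has_real_derivative B') (at 0)"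
    using dB DERIV_shift[of B B' 0 "th p"] by (simp add: add.commute)
  have "((\<lambda>s. A (th p + s) * F (p + s *\<^sub>R unitv k) + B (th p + s) * G (p + s *\<^sub>R unitv k)) has_real_derivative
     A' * F p + A (th p) * partial k F p + (B' * G p + B (th p) * partial k G p)) (at 0)"
    using DERIV_add[OF DERIV_mult[OF dA' slice_has_deriv[OF dF]] DERIV_mult[OF dB' slice_has_deriv[OF dG]]]
    by (simp add: mult.commute)
  then show ?thesis using True unfolding partial_def e
    by (subst DERIV_imp_deriv) (auto simp: algebra_simps)
next
  case False
  have e: "(\<lambda>s. A (th (p + s *\<^sub>R unitv k)) * F (p + s *\<^sub>R unitv k) + B (th (p + s *\<^sub>R unitv k)) * G (p + s *\<^sub>R unitv k))
     = (\<lambda>s. A (th p) * F (p + s *\<^sub>R unitv k) + B (th p) * G (p + s *\<^sub>R unitv k))"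
    using False by (simp add: th_slice)
  have "((\<lambda>s. A (th p) * F (p + s *\<^sub>R unitv k) + B (th p) * G (p + s *\<^sub>R unitv k)) has_real_derivative
     A (th p) * partial k F p + B (th p) * partial k G p) (at 0)"
    using DERIV_add[OF DERIV_cmult[OF slice_has_deriv[OF dF]] DERIV_cmult[OF slice_has_deriv[OF dG]]]
    by simp
  then show ?thesis using False unfolding partial_def e
    by (subst DERIV_imp_deriv) auto
qed



definition reg2 :: "(pt \<Rightarrow> real) \<Rightarrow> pt \<Rightarrow> bool" where
  "reg2 f p \<longleftrightarrow> (\<forall>i<3. \<forall>j<3. (\<lambda>s. partial i f (p + s *\<^sub>R unitv j)) differentiable (at 0))"

lemma VF_comb:
  assumes reg: "reg2 f p" and dA: "(A has_real_derivative A') (at (th p))"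
    and dB: "(B has_real_derivative B') (at (th p))"
  defines "g \<equiv> \<lambda>q. A (th q) * partial 0 f q + B (th q) * partial 1 f q"
  shows "VF 1 g p = cos (th p) * (A (th p) * partial 0 (partial 0 f) p + B (th p) * partial 0 (partial 1 f) p)
                  + sin (th p) * (A (th p) * partial 1 (partial 0 f) p + B (th p) * partial 1 (partial 1 f) p)"
    and "VF 2 g p = A' * partial 0 f p + A (th p) * partial 2 (partial 0 f) p
                  + B' * partial 1 f p + B (th p) * partial 2 (partial 1 f) p"
    and "VF 3 g p = - sin (th p) * (A (th p) * partial 0 (partial 0 f) p + B (th p) * partial 0 (partial 1 f) p)
                  + cos (th p) * (A (th p) * partial 1 (partial 0 f) p + B (th p) * partial 1 (partial 1 f) p)"
proof -
  have d: "(\<lambda>s. partial i f (p + s *\<^sub>R unitv k)) differentiable (at 0)" if "i < 3" "k < 3" for i k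
    using reg that unfolding reg2_def by blast
  have pc: "partial k g p =
    (if k = 2 then A' * partial 0 f p + A (th p) * partial k (partial 0 f) p + B' * partial 1 f p + B (th p) * partial k (partial 1 f) p
     else A (th p) * partial k (partial 0 f) p + B (th p) * partial k (partial 1 f) p)" if "k < 3" for k
    unfolding g_def by (rule partial_comb[OF dA dB d d]) (use that in auto)
  show "VF 1 g p = cos (th p) * (A (th p) * partial 0 (partial 0 f) p + B (th p) * partial 0 (partial 1 f) p)
                  + sin (th p) * (A (th p) * partial 1 (partial 0 f) p + B (th p) * partial 1 (partial 1 f) p)"
    using pc[of 0] pc[of 1] by (simp add: VF_def)
  show "VF 2 g p = A' * partial 0 f p + A (th p) * partial 2 (partial 0 f) p
                  + B' * partial 1 f p + B (th p) * partial 2 (partial 1 f) p"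
    using pc[of 2] by (simp add: VF_def)
  show "VF 3 g p = - sin (th p) * (A (th p) * partial 0 (partial 0 f) p + B (th p) * partial 0 (partial 1 f) p)
                  + cos (th p) * (A (th p) * partial 1 (partial 0 f) p + B (th p) * partial 1 (partial 1 f) p)"
    using pc[of 0] pc[of 1] by (simp add: VF_def)
qed



definition Wv :: "real \<Rightarrow> real \<Rightarrow> nat \<Rightarrow> nat \<Rightarrow> real" where
  "Wv e z i k = (if i = 1 then (if k = 0 then cos z else if k = 1 then sin z else 0)
                 else if i = 2 then (if k = 2 then 1 else 0)
                 else e * (if k = 0 then - sin z else if k = 1 then cos z else 0))"

definition Bf :: "(nat \<Rightarrow> nat \<Rightarrow> real) \<Rightarrow> real \<Rightarrow> real \<Rightarrow> nat \<Rightarrow> nat \<Rightarrow> real" where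
  "Bf H e z i j = (\<Sum>k\<in>{0,1,2}. \<Sum>l\<in>{0,1,2}. Wv e z i k * Wv e z j l * H k l)"

definition Rfo :: "real \<Rightarrow> real \<Rightarrow> real \<Rightarrow> real \<Rightarrow> nat \<Rightarrow> nat \<Rightarrow> real" where
  "Rfo f0 f1 e z i j = (if i = 2 \<and> j = 1 then - sin z * f0 + cos z * f1
     else if i = 2 \<and> j = 3 then e * (- cos z * f0 - sin z * f1) else 0)"

lemma XX:
  assumes reg: "reg2 f p" and ij: "i \<in> {1,2,3}" "j \<in> {1,2,3}"
  shows "VFe e i (VFe e j f) p = Bf (\<lambda>k l. partial k (partial l f) p) e (th p) i j
                               + Rfo (partial 0 f p) (partial 1 f p) e (th p) i j"
proof -
  have j1: "VFe e 1 f = (\<lambda>q. cos (th q) * partial 0 f q + sin (th q) * partial 1 f q)"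
    by (simp add: VFe_def VF_def fun_eq_iff)
  have j3: "VFe e 3 f = (\<lambda>q. (\<lambda>\<theta>. - (e * sin \<theta>)) (th q) * partial 0 f q + (\<lambda>\<theta>. e * cos \<theta>) (th q) * partial 1 f q)"
    by (simp add: VFe_def VF_def fun_eq_iff algebra_simps)
  have j2: "VFe e 2 f = partial 2 f" by (simp add: VFe_def VF_def fun_eq_iff)
  have dc: "(cos has_real_derivative - sin (th p)) (at (th p))" by (rule DERIV_cos)
  have ds: "(sin has_real_derivative cos (th p)) (at (th p))" by (rule DERIV_sin)
  have d3a: "((\<lambda>\<theta>. - (e * sin \<theta>)) has_real_derivative - (e * cos (th p))) (at (th p))"
    by (auto intro!: derivative_eq_intros)
  have d3b: "((\<lambda>\<theta>. e * cos \<theta>) has_real_derivative e * - sin (th p)) (at (th p))"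
    by (auto intro!: derivative_eq_intros)
  note C1 = VF_comb[OF reg dc ds]
  note C3 = VF_comb[OF reg d3a d3b]
  have V2: "VF 1 (partial 2 f) p = cos (th p) * partial 0 (partial 2 f) p + sin (th p) * partial 1 (partial 2 f) p"
    "VF 2 (partial 2 f) p = partial 2 (partial 2 f) p"
    "VF 3 (partial 2 f) p = - sin (th p) * partial 0 (partial 2 f) p + cos (th p) * partial 1 (partial 2 f) p"
    by (simp_all add: VF_def)
  have VFe_i: "VFe e 1 g p = VF 1 g p" "VFe e 2 g p = VF 2 g p" "VFe e 3 g p = e * VF 3 g p" for g
    by (simp_all add: VFe_def)
  show ?thesis
    using ij
    apply (simp only: insert_iff empty_iff)
    apply (elim disjE)
    apply (simp_all only: VFe_i j1 j2 j3 C1 C3 V2)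
    apply (simp_all add: Bf_def Wv_def Rfo_def algebra_simps)
    done
qed



lemma key_alg:
  fixes B :: "nat \<Rightarrow> nat \<Rightarrow> real" and P :: "nat \<Rightarrow> real"
  assumes tau: "\<tau> > 0" and sg: "\<sigma> \<ge> 0"
  and neg: "\<And>x::nat\<Rightarrow>real. (\<Sum>i\<in>{1,2,3}. \<Sum>j\<in>{1,2,3}. x i * x j * B i j) \<le> 0"
  shows "(\<Sum>i\<in>{1,2,3}. \<Sum>j\<in>{1,2,3}. Acoef \<tau> \<sigma> P i j * B i j) \<le> 0"
proof -
  define N where "N = (P 1)\<^sup>2 + (P 2)\<^sup>2 + (P 3)\<^sup>2 + \<tau>"
  have Npos: "N > 0" unfolding N_def using tau by (smt (verit) zero_le_power2)
  have t1: "B 1 1 \<le> 0" using neg[of "\<lambda>i. if i = 1 then 1 else 0"] by simp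
  have t2: "B 2 2 \<le> 0" using neg[of "\<lambda>i. if i = 2 then 1 else 0"] by simp
  have t3: "B 3 3 \<le> 0" using neg[of "\<lambda>i. if i = 3 then 1 else 0"] by simp
  define Y1 where "Y1 = (P 3)\<^sup>2 * B 2 2 - P 3 * P 2 * B 2 3 - P 2 * P 3 * B 3 2 + (P 2)\<^sup>2 * B 3 3"
  define Y2 where "Y2 = (P 3)\<^sup>2 * B 1 1 - P 3 * P 1 * B 1 3 - P 1 * P 3 * B 3 1 + (P 1)\<^sup>2 * B 3 3"
  define Y3 where "Y3 = (P 2)\<^sup>2 * B 1 1 - P 2 * P 1 * B 1 2 - P 1 * P 2 * B 2 1 + (P 1)\<^sup>2 * B 2 2"
  have y1: "Y1 \<le> 0" using neg[of "\<lambda>i. if i = 2 then P 3 else if i = 3 then - P 2 else 0"]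
    by (simp add: Y1_def power2_eq_square algebra_simps)
  have y2: "Y2 \<le> 0" using neg[of "\<lambda>i. if i = 1 then P 3 else if i = 3 then - P 1 else 0"]
    by (simp add: Y2_def power2_eq_square algebra_simps)
  have y3: "Y3 \<le> 0" using neg[of "\<lambda>i. if i = 1 then P 2 else if i = 2 then - P 1 else 0"]
    by (simp add: Y3_def power2_eq_square algebra_simps)
  have A: "Acoef \<tau> \<sigma> P i j = kdelta i j * (1 + \<sigma>) - P i * P j / N" for i j
    by (simp add: Acoef_def N_def algebra_simps)
  define Q where "Q = (\<Sum>i\<in>{1,2,3}. \<Sum>j\<in>{1,2,3}. P i * P j * B i j)"
  have S: "(\<Sum>i\<in>{1,2,3}. \<Sum>j\<in>{1,2,3}. Acoef \<tau> \<sigma> P i j * B i j)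
      = (1 + \<sigma>) * (B 1 1 + B 2 2 + B 3 3) - Q / N"
    unfolding A Q_def by (simp add: kdelta_def algebra_simps add_divide_distrib diff_divide_distrib)
  have E': "N * ((1 + \<sigma>) * (B 1 1 + B 2 2 + B 3 3)) - Q = (\<tau> + \<sigma> * N) * (B 1 1 + B 2 2 + B 3 3) + (Y1 + Y2 + Y3)"
    unfolding Q_def Y1_def Y2_def Y3_def N_def by (simp add: algebra_simps power2_eq_square)
  have E: "(\<Sum>i\<in>{1,2,3}. \<Sum>j\<in>{1,2,3}. Acoef \<tau> \<sigma> P i j * B i j) * N
     = (\<tau> + \<sigma> * N) * (B 1 1 + B 2 2 + B 3 3) + (Y1 + Y2 + Y3)"
  proof -
    have "((1 + \<sigma>) * (B 1 1 + B 2 2 + B 3 3) - Q / N) * N = N * ((1 + \<sigma>) * (B 1 1 + B 2 2 + B 3 3)) - Q"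
      using Npos by (simp add: left_diff_distrib)
    then show ?thesis unfolding S E' .
  qed
  have "(\<tau> + \<sigma> * N) * (B 1 1 + B 2 2 + B 3 3) \<le> 0"
    using t1 t2 t3 tau sg Npos by (intro mult_nonneg_nonpos) auto
  then have "(\<Sum>i\<in>{1,2,3}. \<Sum>j\<in>{1,2,3}. Acoef \<tau> \<sigma> P i j * B i j) * N \<le> 0"
    using E y1 y2 y3 by linarith
  then show ?thesis using Npos by (simp add: mult_le_0_iff)
qed



lemma bridge:
  fixes H :: "nat \<Rightarrow> nat \<Rightarrow> real"
  assumes q: "\<And>a b c. a*(a*H 0 0 + b*H 1 0 + c*H 2 0) + b*(a*H 0 1 + b*H 1 1 + c*H 2 1)
                     + c*(a*H 0 2 + b*H 1 2 + c*H 2 2) \<le> 0"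
  shows "(\<Sum>i\<in>{1,2,3}. \<Sum>j\<in>{1,2,3}. x i * x j * Bf H e z i j) \<le> 0"
proof -
  have "(\<Sum>i\<in>{1,2,3}. \<Sum>j\<in>{1,2,3}. x i * x j * Bf H e z i j) =
    (let a = x 1 * cos z - x 3 * e * sin z; b = x 1 * sin z + x 3 * e * cos z; c = x 2 in
     a*(a*H 0 0 + b*H 1 0 + c*H 2 0) + b*(a*H 0 1 + b*H 1 1 + c*H 2 1)
     + c*(a*H 0 2 + b*H 1 2 + c*H 2 2))"
    by (simp add: Bf_def Wv_def Let_def algebra_simps)
  then show ?thesis using q by (simp add: Let_def)
qed

lemma partial_diff:
  assumes "(\<lambda>s. F (q + s *\<^sub>R unitv k)) differentiable (at 0)"
    and "(\<lambda>s. G (q + s *\<^sub>R unitv k)) differentiable (at 0)"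
  shows "partial k (\<lambda>q. F q - G q) q = partial k F q - partial k G q"
    and "(\<lambda>s. F (q + s *\<^sub>R unitv k) - G (q + s *\<^sub>R unitv k)) differentiable (at 0)"
proof -
  have D: "((\<lambda>s. F (q + s *\<^sub>R unitv k) - G (q + s *\<^sub>R unitv k)) has_real_derivative
      partial k F q - partial k G q) (at 0)"
    using DERIV_diff[OF slice_has_deriv[OF assms(1)] slice_has_deriv[OF assms(2)]] .
  then show "partial k (\<lambda>q. F q - G q) q = partial k F q - partial k G q"
    unfolding partial_def by (rule DERIV_imp_deriv)
  from D show "(\<lambda>s. F (q + s *\<^sub>R unitv k) - G (q + s *\<^sub>R unitv k)) differentiable (at 0)"
    using real_differentiable_def by blast
qed

lemma tc_dist: "\<bar>tc q - tc p\<bar> \<le> dist q p"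
proof -
  have "dist (snd (snd (snd q))) (snd (snd (snd p))) \<le> dist (snd (snd q)) (snd (snd p))" by (rule dist_snd_le)
  also have "\<dots> \<le> dist (snd q) (snd p)" by (rule dist_snd_le)
  also have "\<dots> \<le> dist q p" by (rule dist_snd_le)
  finally show ?thesis by (simp add: tc_def dist_real_def)
qed

lemma open_T: "open {q. tc q > 0}"
proof -
  have "continuous_on UNIV tc" unfolding tc_def[abs_def] by (intro continuous_intros)
  then show ?thesis using open_Collect_less[of "\<lambda>q. 0" tc] by simp
qed

lemma tc_slice: "j \<noteq> 3 \<Longrightarrow> tc (q + s *\<^sub>R unitv j) = tc q"
  by (cases q) (auto simp: tc_def unitv_def)



definition regT :: "(pt \<Rightarrow> real) \<Rightarrow> bool" where
 "regT F \<longleftrightarrow> (\<forall>q. tc q > 0 \<longrightarrow>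
    (\<forall>i<4. (\<lambda>s. F (q + s *\<^sub>R unitv i)) differentiable (at 0)) \<and>
    (\<forall>i<3. \<forall>j<3. (\<lambda>s. partial i F (q + s *\<^sub>R unitv j)) differentiable (at 0)) \<and>
    (\<forall>i<3. isCont (partial i F) q) \<and>
    (\<forall>i<3. \<forall>j<3. isCont (partial j (partial i F)) q))"

lemma isCont_T:
  assumes "tc q > 0" and eq: "\<And>q'. tc q' > 0 \<Longrightarrow> F q' = G q'" and "isCont G q"
  shows "isCont F q"
proof -
  have "eventually (\<lambda>q'. q' \<in> {q. tc q > 0}) (nhds q)"
    using eventually_nhds_in_open[OF open_T] assms(1) by simp
  then have "eventually (\<lambda>q'. F q' = G q') (nhds q)" by eventually_elim (simp add: eq)
  then show ?thesis using isCont_cong assms(3) by blast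
qed

lemma partial_cmult:
  assumes "(\<lambda>s. F (q + s *\<^sub>R unitv k)) differentiable (at 0)"
  shows "partial k (\<lambda>q. c * F q) q = c * partial k F q"
    and "(\<lambda>s. c * F (q + s *\<^sub>R unitv k)) differentiable (at 0)"
proof -
  have D: "((\<lambda>s. c * F (q + s *\<^sub>R unitv k)) has_real_derivative c * partial k F q) (at 0)"
    using DERIV_cmult[OF slice_has_deriv[OF assms]] .
  then show "partial k (\<lambda>q. c * F q) q = c * partial k F q"
    unfolding partial_def by (rule DERIV_imp_deriv)
  from D show "(\<lambda>s. c * F (q + s *\<^sub>R unitv k)) differentiable (at 0)"
    using real_differentiable_def by blast
qed

lemma touch:
  fixes U psi :: "pt \<Rightarrow> real"
  assumes tau: "\<tau> > 0" and sg: "\<sigma> \<ge> 0" and dpos: "\<delta> > 0" and dle: "\<delta> \<le> tc p"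
  and sgn: "s = 1 \<or> s = -1"
  and maxU: "\<And>q. dist q p < \<delta> \<Longrightarrow> s * (U q - psi q) \<le> s * (U p - psi p)"
  and rU: "regT U" and rP: "regT psi"
  and pde: "partial 3 U p = (\<Sum>i\<in>{1,2,3}. \<Sum>j\<in>{1,2,3}. Acoef \<tau> \<sigma> (\<lambda>k. VFe e k U p) i j * VFe e i (VFe e j U) p)"
  shows "s * partial 3 psi p \<le> s * (\<Sum>i\<in>{1,2,3}. \<Sum>j\<in>{1,2,3}. Acoef \<tau> \<sigma> (\<lambda>k. VFe e k psi p) i j * VFe e i (VFe e j psi) p)"
proof -
  obtain x y z t where p: "p = (x,y,z,t)" by (cases p)
  have inT: "tc q > 0" if "dist q p < \<delta>" for q
    using tc_dist[of q p] that dle by linarith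
  have tp: "tc p > 0" using dpos dle by simp
  define f where "f = (\<lambda>q. U q - psi q)"
  have sU: "(\<lambda>s. U (q + s *\<^sub>R unitv i)) differentiable (at 0)"
    and sP: "(\<lambda>s. psi (q + s *\<^sub>R unitv i)) differentiable (at 0)"
    if "tc q > 0" "i < 4" for q i
    using rU rP that unfolding regT_def by blast+
  have pf1: "partial i f q = partial i U q - partial i psi q" if "tc q > 0" "i < 4" for q i
    unfolding f_def using partial_diff(1)[OF sU[OF that] sP[OF that]] .
  have df1: "(\<lambda>s. f (q + s *\<^sub>R unitv i)) differentiable (at 0)" if "tc q > 0" "i < 4" for q i
    unfolding f_def using partial_diff(2)[OF sU[OF that] sP[OF that]] .
  have pf1fun: "(\<lambda>s. partial i f (q + s *\<^sub>R unitv j)) =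
      (\<lambda>s. partial i U (q + s *\<^sub>R unitv j) - partial i psi (q + s *\<^sub>R unitv j))"
    if "tc q > 0" "i < 4" "j < 3" for q i j
    using that by (auto simp: fun_eq_iff tc_slice intro!: pf1)
  have sU2: "(\<lambda>s. partial i U (q + s *\<^sub>R unitv j)) differentiable (at 0)"
    and sP2: "(\<lambda>s. partial i psi (q + s *\<^sub>R unitv j)) differentiable (at 0)"
    if "tc q > 0" "i < 3" "j < 3" for q i j
    using rU rP that unfolding regT_def by blast+
  have cU1: "isCont (partial i U) q" and cP1: "isCont (partial i psi) q"
    if "tc q > 0" "i < 3" for q i
    using rU rP that unfolding regT_def by blast+
  have cU2: "isCont (partial j (partial i U)) q" and cP2: "isCont (partial j (partial i psi)) q"
    if "tc q > 0" "i < 3" "j < 3" for q i j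
    using rU rP that unfolding regT_def by blast+
  have pf2: "partial j (partial i f) q = partial j (partial i U) q - partial j (partial i psi) q"
    if "tc q > 0" "i < 3" "j < 3" for q i j
  proof -
    have "partial j (partial i f) q = partial j (\<lambda>q. partial i U q - partial i psi q) q"
    proof -
      have e: "(\<lambda>s. partial i f (q + s *\<^sub>R unitv j)) =
        (\<lambda>s. partial i U (q + s *\<^sub>R unitv j) - partial i psi (q + s *\<^sub>R unitv j))"
        using pf1fun[of q i j] that by simp
      show ?thesis
        unfolding partial_def[of j "partial i f"] partial_def[of j "\<lambda>q. partial i U q - partial i psi q"] e ..
    qed
    also have "\<dots> = partial j (partial i U) q - partial j (partial i psi) q"
      using partial_diff(1)[OF sU2[OF that] sP2[OF that]] .
    finally show ?thesis .
  qed
  have df2: "(\<lambda>s. partial i f (q + s *\<^sub>R unitv j)) differentiable (at 0)"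
    if "tc q > 0" "i < 3" "j < 3" for q i j
    using pf1fun[of q i j] partial_diff(2)[OF sU2[OF that] sP2[OF that]] that by simp
  have c1: "isCont (partial i f) q" if "tc q > 0" "i < 3" for q i
  proof (rule isCont_T[OF that(1)])
    show "partial i f q' = partial i U q' - partial i psi q'" if "tc q' > 0" for q'
      using pf1 that \<open>i < 3\<close> by simp
    show "isCont (\<lambda>q'. partial i U q' - partial i psi q') q"
      using cU1 cP1 \<open>tc q > 0\<close> \<open>i < 3\<close> by (intro continuous_intros) auto
  qed
  have c2: "isCont (partial j (partial i f)) q" if "tc q > 0" "i < 3" "j < 3" for q i j
  proof (rule isCont_T[OF that(1)])
    show "partial j (partial i f) q' = partial j (partial i U) q' - partial j (partial i psi) q'" if "tc q' > 0" for q'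
      using pf2 that \<open>i < 3\<close> \<open>j < 3\<close> by simp
    show "isCont (\<lambda>q'. partial j (partial i U) q' - partial j (partial i psi) q') q"
      using cU2 cP2 \<open>tc q > 0\<close> \<open>i < 3\<close> \<open>j < 3\<close> by (intro continuous_intros) auto
  qed
  define g where "g = (\<lambda>q. s * f q)"
  have pg1: "partial i g q = s * partial i f q" if "tc q > 0" "i < 4" for q i
    unfolding g_def using partial_cmult(1)[OF df1[OF that]] .
  have dg1: "(\<lambda>t. g (q + t *\<^sub>R unitv i)) differentiable (at 0)" if "tc q > 0" "i < 4" for q i
    unfolding g_def using partial_cmult(2)[OF df1[OF that]] .
  have pg1fun: "(\<lambda>t. partial i g (q + t *\<^sub>R unitv j)) = (\<lambda>t. s * partial i f (q + t *\<^sub>R unitv j))"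
    if "tc q > 0" "i < 4" "j < 3" for q i j
    using that by (auto simp: fun_eq_iff tc_slice intro!: pg1)
  have pg2: "partial j (partial i g) q = s * partial j (partial i f) q"
    if "tc q > 0" "i < 3" "j < 3" for q i j
  proof -
    have "partial j (partial i g) q = partial j (\<lambda>q. s * partial i f q) q"
      unfolding partial_def[of j "partial i g"] partial_def[of j "\<lambda>q. s * partial i f q"]
      using pg1fun[of q i j] that by simp
    also have "\<dots> = s * partial j (partial i f) q"
      using partial_cmult(1)[OF df2[OF that]] .
    finally show ?thesis .
  qed
  have dg2: "(\<lambda>t. partial i g (q + t *\<^sub>R unitv j)) differentiable (at 0)"
    if "tc q > 0" "i < 3" "j < 3" for q i j
    using pg1fun[of q i j] partial_cmult(2)[OF df2[OF that]] that by simp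
  have cg1: "isCont (partial i g) q" if "tc q > 0" "i < 3" for q i
  proof (rule isCont_T[OF that(1)])
    show "partial i g q' = s * partial i f q'" if "tc q' > 0" for q'
      using pg1 that \<open>i < 3\<close> by simp
    show "isCont (\<lambda>q'. s * partial i f q') q"
      using c1 that by (intro continuous_intros) auto
  qed
  have cg2: "isCont (partial j (partial i g)) q" if "tc q > 0" "i < 3" "j < 3" for q i j
  proof (rule isCont_T[OF that(1)])
    show "partial j (partial i g) q' = s * partial j (partial i f) q'" if "tc q' > 0" for q'
      using pg2 that \<open>i < 3\<close> \<open>j < 3\<close> by simp
    show "isCont (\<lambda>q'. s * partial j (partial i f) q') q"
      using c2 that by (intro continuous_intros) auto
  qed
  define Hg where "Hg k l = partial k (partial l g) p" for k l
  define Hf where "Hf k l = partial k (partial l f) p" for k l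
  have Q: "a*(a*Hg 0 0 + b*Hg 1 0 + c*Hg 2 0) + b*(a*Hg 0 1 + b*Hg 1 1 + c*Hg 2 1)
           + c*(a*Hg 0 2 + b*Hg 1 2 + c*Hg 2 2) \<le> 0" for a b c
    unfolding Hg_def p
  proof (rule max2[OF dpos])
    fix q assume q: "dist q (x,y,z,t) < \<delta>"
    then have tq: "tc q > 0" using inT p by simp
    show "g q \<le> g (x,y,z,t)" using maxU q p by (simp add: g_def f_def)
    show "(\<lambda>s. g (q + s *\<^sub>R unitv i)) differentiable (at 0)" if "i < 3" for i
      using dg1 tq that by simp
    show "(\<lambda>s. partial i g (q + s *\<^sub>R unitv j)) differentiable (at 0)" if "i < 3" "j < 3" for i j
      using dg2 tq that by simp
    show "isCont (partial i g) q" if "i < 3" for i using cg1 tq that by simp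
  next
    fix i j :: nat assume "i < 3" "j < 3"
    then show "isCont (partial j (partial i g)) (x,y,z,t)" using cg2 tp p by simp
  qed
  have sne: "s \<noteq> 0" using sgn by auto
  have grad: "partial k U p = partial k psi p" if "k < 4" for k
  proof -
    have "partial k g p = 0"
      by (rule grad_zero[OF dpos]) (use maxU dg1 tp that in \<open>auto simp: g_def f_def\<close>)
    then have "partial k f p = 0" using pg1[OF tp that] sne by simp
    then show ?thesis using pf1[OF tp that] by simp
  qed
  have HgHf: "Hg k l = s * Hf k l" if "k < 3" "l < 3" for k l
    unfolding Hg_def Hf_def using pg2[OF tp that(2) that(1)] .
  have Bfs: "Bf Hg e z' i j = s * Bf Hf e z' i j" for z' i j
    by (simp add: Bf_def HgHf algebra_simps)
  have VFeq: "VFe e k U p = VFe e k psi p" for k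
    using grad[of 0] grad[of 1] grad[of 2] by (simp add: VFe_def VF_def)
  have regU: "reg2 U p" and regP: "reg2 psi p"
    unfolding reg2_def using sU2 sP2 tp by auto
  have HfD: "Hf k l = partial k (partial l U) p - partial k (partial l psi) p" if "k < 3" "l < 3" for k l
    unfolding Hf_def using pf2[OF tp that(2) that(1)] .
  have Bflin: "Bf (\<lambda>k l. partial k (partial l U) p) e (th p) i j =
      Bf (\<lambda>k l. partial k (partial l psi) p) e (th p) i j + Bf Hf e (th p) i j" for i j
    by (simp add: Bf_def HfD algebra_simps)
  have XXeq: "VFe e i (VFe e j U) p = VFe e i (VFe e j psi) p + Bf Hf e (th p) i j"
    if "i \<in> {1,2,3}" "j \<in> {1,2,3}" for i j
    using XX[OF regU that, of e] XX[OF regP that, of e] Bflin[of i j] grad[of 0] grad[of 1]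
    by simp
  have neg: "(\<Sum>i\<in>{1,2,3}. \<Sum>j\<in>{1,2,3}. Acoef \<tau> \<sigma> (\<lambda>k. VFe e k psi p) i j * Bf Hg e (th p) i j) \<le> 0"
    by (rule key_alg[OF tau sg]) (rule bridge[OF Q])
  have negs: "(\<Sum>i\<in>{1,2,3}. \<Sum>j\<in>{1,2,3}. Acoef \<tau> \<sigma> (\<lambda>k. VFe e k psi p) i j * Bf Hg e (th p) i j)
     = s * (\<Sum>i\<in>{1,2,3}. \<Sum>j\<in>{1,2,3}. Acoef \<tau> \<sigma> (\<lambda>k. VFe e k psi p) i j * Bf Hf e (th p) i j)"
    by (simp add: Bfs algebra_simps)
  have "partial 3 psi p = partial 3 U p" using grad[of 3] by simp
  also have "\<dots> = (\<Sum>i\<in>{1,2,3}. \<Sum>j\<in>{1,2,3}. Acoef \<tau> \<sigma> (\<lambda>k. VFe e k psi p) i j *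
        (VFe e i (VFe e j psi) p + Bf Hf e (th p) i j))"
    unfolding pde VFeq
    by (intro sum.cong refl) (simp add: XXeq)
  also have "\<dots> = (\<Sum>i\<in>{1,2,3}. \<Sum>j\<in>{1,2,3}. Acoef \<tau> \<sigma> (\<lambda>k. VFe e k psi p) i j * VFe e i (VFe e j psi) p)
     + (\<Sum>i\<in>{1,2,3}. \<Sum>j\<in>{1,2,3}. Acoef \<tau> \<sigma> (\<lambda>k. VFe e k psi p) i j * Bf Hf e (th p) i j)"
    by (simp add: distrib_left sum.distrib)
  finally have "s * partial 3 psi p = s * (\<Sum>i\<in>{1,2,3}. \<Sum>j\<in>{1,2,3}. Acoef \<tau> \<sigma> (\<lambda>k. VFe e k psi p) i j * VFe e i (VFe e j psi) p)
     + s * (\<Sum>i\<in>{1,2,3}. \<Sum>j\<in>{1,2,3}. Acoef \<tau> \<sigma> (\<lambda>k. VFe e k psi p) i j * Bf Hf e (th p) i j)"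
    by (simp add: distrib_left)
  then show ?thesis using neg negs by linarith
qed



lemma cp1:
  assumes "cont_partials S F [i]"
  shows "continuous_on S (partial i F)" "continuous_on S F"
    "\<And>q. q \<in> S \<Longrightarrow> (\<lambda>s. F (q + s *\<^sub>R unitv i)) differentiable (at 0)"
proof -
  have a: "\<forall>j\<le>1. continuous_on S (iter_partial (drop j [i]) F)"
    and b: "\<forall>j<1. \<forall>p\<in>S. (\<lambda>s. iter_partial (drop (Suc j) [i]) F (p + s *\<^sub>R unitv ([i] ! j))) differentiable (at 0)"
    using assms unfolding cont_partials_def by auto
  from a have "continuous_on S (iter_partial (drop 0 [i]) F)" by blast
  then show "continuous_on S (partial i F)" by simp
  from a have "continuous_on S (iter_partial (drop 1 [i]) F)" by blast
  then show "continuous_on S F" by simp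
  fix q assume "q \<in> S"
  with b have "(\<lambda>s. iter_partial (drop (Suc 0) [i]) F (q + s *\<^sub>R unitv ([i] ! 0))) differentiable (at 0)" by blast
  then show "(\<lambda>s. F (q + s *\<^sub>R unitv i)) differentiable (at 0)" by simp
qed

lemma cp2:
  assumes "cont_partials S F [j, i]"
  shows "continuous_on S (partial j (partial i F))"
    "\<And>q. q \<in> S \<Longrightarrow> (\<lambda>s. partial i F (q + s *\<^sub>R unitv j)) differentiable (at 0)"
proof -
  have a: "\<forall>k\<le>length [j,i]. continuous_on S (iter_partial (drop k [j,i]) F)"
    and b: "\<forall>k<length [j,i]. \<forall>p\<in>S. (\<lambda>s. iter_partial (drop (Suc k) [j,i]) F (p + s *\<^sub>R unitv ([j,i] ! k))) differentiable (at 0)"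
    using assms unfolding cont_partials_def by blast+
  from a have "continuous_on S (iter_partial (drop 0 [j,i]) F)" by blast
  then show "continuous_on S (partial j (partial i F))" by simp
  fix q assume "q \<in> S"
  with b have "(\<lambda>s. iter_partial (drop (Suc 0) [j,i]) F (q + s *\<^sub>R unitv ([j,i] ! 0))) differentiable (at 0)"
    by (metis length_Cons list.size(3) zero_less_Suc)
  then show "(\<lambda>s. partial i F (q + s *\<^sub>R unitv j)) differentiable (at 0)" by simp
qed

lemma regT_C21:
  assumes "C21_on {q. tc q > 0} U"
  shows "regT U"
proof -
  let ?T = "{q. tc q > 0}"
  have one: "cont_partials ?T U [i]" if "i < 3" for i
  proof -
    have "set [i] \<subseteq> {0,1,2} \<and> length [i] \<le> 2" using that by auto
    then show ?thesis using assms unfolding C21_on_def by blast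
  qed
  have three: "cont_partials ?T U [3]" using assms unfolding C21_on_def by blast
  have two: "cont_partials ?T U [j, i]" if "i < 3" "j < 3" for i j
  proof -
    have "set [j, i] \<subseteq> {0,1,2} \<and> length [j, i] \<le> 2" using that by auto
    then show ?thesis using assms unfolding C21_on_def by blast
  qed
  have isc: "isCont F q" if "continuous_on ?T F" "tc q > 0" for F q
    using that continuous_on_eq_continuous_at[OF open_T] by blast
  show ?thesis unfolding regT_def
  proof (intro allI impI)
    fix q :: pt assume q: "tc q > 0"
    have A: "\<forall>i<4. (\<lambda>s. U (q + s *\<^sub>R unitv i)) differentiable (at 0)"
    proof (intro allI impI)
      fix i :: nat assume "i < 4"
      then have "i < 3 \<or> i = 3" by auto
      then show "(\<lambda>s. U (q + s *\<^sub>R unitv i)) differentiable (at 0)"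
        using cp1(3)[OF one, of i q] cp1(3)[OF three, of q] q by auto
    qed
    have B: "\<forall>i<3. \<forall>j<3. (\<lambda>s. partial i U (q + s *\<^sub>R unitv j)) differentiable (at 0)"
      using cp2(2)[OF two] q by auto
    have C: "\<forall>i<3. isCont (partial i U) q"
      using isc[OF cp1(1)[OF one] q] by blast
    have D: "\<forall>i<3. \<forall>j<3. isCont (partial j (partial i U)) q"
      using isc[OF cp2(1)[OF two] q] by blast
    show "(\<forall>i<4. (\<lambda>s. U (q + s *\<^sub>R unitv i)) differentiable (at 0)) \<and>
    (\<forall>i<3. \<forall>j<3. (\<lambda>s. partial i U (q + s *\<^sub>R unitv j)) differentiable (at 0)) \<and>
    (\<forall>i<3. isCont (partial i U) q) \<and>
    (\<forall>i<3. \<forall>j<3. isCont (partial j (partial i U)) q)" using A B C D by blast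
  qed
qed



definition cmp :: "nat \<Rightarrow> pt \<Rightarrow> real" where
  "cmp k q = (if k = 0 then fst q else if k = 1 then fst (snd q) else if k = 2 then fst (snd (snd q))
               else snd (snd (snd q)))"

definition ns :: "pt \<Rightarrow> pt \<Rightarrow> real" where
  "ns p0 q = (\<Sum>k\<in>{0,1,2,3}. (cmp k q - cmp k p0)\<^sup>2)"

definition quart :: "pt \<Rightarrow> pt \<Rightarrow> real" where
  "quart p0 q = (ns p0 q)\<^sup>2"

definition pq1 :: "pt \<Rightarrow> nat \<Rightarrow> pt \<Rightarrow> real" where
  "pq1 p0 i q = 4 * ns p0 q * (cmp i q - cmp i p0)"

definition pq2 :: "pt \<Rightarrow> nat \<Rightarrow> nat \<Rightarrow> pt \<Rightarrow> real" where
  "pq2 p0 j i q = 4 * (2 * (cmp j q - cmp j p0) * (cmp i q - cmp i p0) + (if i = j then ns p0 q else 0))"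

lemma cmp_slice: "i < 4 \<Longrightarrow> k < 4 \<Longrightarrow> cmp k (q + s *\<^sub>R unitv i) = cmp k q + (if k = i then s else 0)"
  by (cases q) (auto simp: cmp_def unitv_def)

lemma ns_slice: assumes "i < 4"
  shows "ns p0 (q + s *\<^sub>R unitv i) = ns p0 q + 2 * s * (cmp i q - cmp i p0) + s\<^sup>2"
proof -
  have "i = 0 \<or> i = 1 \<or> i = 2 \<or> i = 3" using assms by auto
  then show ?thesis
    by (elim disjE) (simp_all add: ns_def cmp_slice power2_eq_square algebra_simps)
qed

lemma cont_cmp: "continuous_on UNIV (cmp k)"
proof -
  have "cmp k = fst \<or> cmp k = (\<lambda>q. fst (snd q)) \<or> cmp k = (\<lambda>q. fst (snd (snd q))) \<or> cmp k = (\<lambda>q. snd (snd (snd q)))"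
    by (cases "k = 0"; cases "k = 1"; cases "k = 2") (auto simp: cmp_def[abs_def])
  then show ?thesis by (elim disjE) (simp_all add: continuous_intros)
qed

lemma cont_ns: "continuous_on UNIV (ns p0)"
  unfolding ns_def[abs_def] using cont_cmp by (intro continuous_intros) auto

lemma isCont_cmp: "isCont (cmp k) q"
  using cont_cmp continuous_on_eq_continuous_at open_UNIV by blast
lemma isCont_ns: "isCont (ns p0) q"
  using cont_ns continuous_on_eq_continuous_at open_UNIV by blast

lemma isCont_pq1: "isCont (pq1 p0 i) q"
  unfolding pq1_def[abs_def] using isCont_cmp isCont_ns by (intro continuous_intros)
lemma isCont_pq2: "isCont (pq2 p0 j i) q"
  unfolding pq2_def[abs_def] using isCont_cmp isCont_ns by (cases "i = j") (simp_all add: continuous_intros)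

lemma quart_slice:
  assumes "i < 4"
  shows "((\<lambda>s. quart p0 (q + s *\<^sub>R unitv i)) has_real_derivative pq1 p0 i q) (at 0)"
proof -
  have e: "(\<lambda>s. quart p0 (q + s *\<^sub>R unitv i)) = (\<lambda>s. (ns p0 q + 2 * s * (cmp i q - cmp i p0) + s\<^sup>2)\<^sup>2)"
    using ns_slice[OF assms] by (simp add: quart_def fun_eq_iff)
  show ?thesis unfolding e pq1_def
    by (auto intro!: derivative_eq_intros simp: algebra_simps)
qed

lemma pq1_slice:
  assumes "i < 4" "j < 4"
  shows "((\<lambda>s. pq1 p0 i (q + s *\<^sub>R unitv j)) has_real_derivative pq2 p0 j i q) (at 0)"
proof -
  have e: "(\<lambda>s. pq1 p0 i (q + s *\<^sub>R unitv j)) = (\<lambda>s. 4 * (ns p0 q + 2 * s * (cmp j q - cmp j p0) + s\<^sup>2)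
      * (cmp i q - cmp i p0 + (if i = j then s else 0)))"
  proof
    fix s
    show "pq1 p0 i (q + s *\<^sub>R unitv j) = 4 * (ns p0 q + 2 * s * (cmp j q - cmp j p0) + s\<^sup>2)
      * (cmp i q - cmp i p0 + (if i = j then s else 0))"
      unfolding pq1_def ns_slice[OF assms(2)] cmp_slice[OF assms(2) assms(1)] by simp
  qed
  show ?thesis unfolding e pq2_def
    by (cases "i = j") (auto intro!: derivative_eq_intros simp: algebra_simps)
qed

lemma partial_quart: "i < 4 \<Longrightarrow> partial i (quart p0) q = pq1 p0 i q"
  unfolding partial_def using quart_slice by (rule DERIV_imp_deriv)

lemma partial_quart_fun: "i < 4 \<Longrightarrow> partial i (quart p0) = pq1 p0 i"
  using partial_quart by blast

lemma partial2_quart: "i < 4 \<Longrightarrow> j < 4 \<Longrightarrow> partial j (partial i (quart p0)) q = pq2 p0 j i q"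
  unfolding partial_quart_fun partial_def using pq1_slice by (rule DERIV_imp_deriv)

lemma cmp_p0: "ns p0 p0 = 0" "pq1 p0 i p0 = 0" "pq2 p0 j i p0 = 0"
  by (simp_all add: ns_def pq1_def pq2_def)



definition phireg :: "(pt \<Rightarrow> real) \<Rightarrow> bool" where
  "phireg phi \<longleftrightarrow> (\<forall>is. set is \<subseteq> {0,1,2,3} \<and> length is \<le> 2 \<longrightarrow> cont_partials UNIV phi is)"

lemma smooth_phireg: "smooth_fun phi \<Longrightarrow> phireg phi"
  unfolding smooth_fun_def phireg_def by blast

lemma isCont_UNIV: "continuous_on UNIV F \<Longrightarrow> isCont F q"
  using continuous_on_eq_continuous_at open_UNIV by blast

context
  fixes phi :: "pt \<Rightarrow> real"
  assumes pr: "phireg phi"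
begin

lemma ph1: "i < 4 \<Longrightarrow> cont_partials UNIV phi [i]"
proof -
  assume "i < 4"
  then have "set [i] \<subseteq> {0,1,2,3} \<and> length [i] \<le> 2" by auto
  then show ?thesis using pr unfolding phireg_def by blast
qed
lemma ph2: "i < 4 \<Longrightarrow> j < 4 \<Longrightarrow> cont_partials UNIV phi [j, i]"
proof -
  assume "i < 4" "j < 4"
  then have "set [j, i] \<subseteq> {0,1,2,3} \<and> length [j, i] \<le> 2" by auto
  then show ?thesis using pr unfolding phireg_def by blast
qed

lemma ph_sl: "i < 4 \<Longrightarrow> (\<lambda>s. phi (q + s *\<^sub>R unitv i)) differentiable (at 0)"
  using cp1(3)[OF ph1] by blast
lemma ph_sl2: "i < 4 \<Longrightarrow> j < 4 \<Longrightarrow> (\<lambda>s. partial i phi (q + s *\<^sub>R unitv j)) differentiable (at 0)"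
  using cp2(2)[OF ph2] by blast
lemma ph_c1: "i < 4 \<Longrightarrow> isCont (partial i phi) q"
  using cp1(1)[OF ph1] isCont_UNIV by blast
lemma ph_c2: "i < 4 \<Longrightarrow> j < 4 \<Longrightarrow> isCont (partial j (partial i phi)) q"
  using cp2(1)[OF ph2] isCont_UNIV by blast

end

lemma partial_addc:
  assumes "(\<lambda>s. F (q + s *\<^sub>R unitv k)) differentiable (at 0)"
    and "((\<lambda>s. G (q + s *\<^sub>R unitv k)) has_real_derivative D) (at 0)"
  shows "partial k (\<lambda>q. F q + c * G q) q = partial k F q + c * D"
    and "(\<lambda>s. F (q + s *\<^sub>R unitv k) + c * G (q + s *\<^sub>R unitv k)) differentiable (at 0)"
proof -
  have Dd: "((\<lambda>s. F (q + s *\<^sub>R unitv k) + c * G (q + s *\<^sub>R unitv k)) has_real_derivative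
      partial k F q + c * D) (at 0)"
    using DERIV_add[OF slice_has_deriv[OF assms(1)] DERIV_cmult[OF assms(2)]] .
  then show "partial k (\<lambda>q. F q + c * G q) q = partial k F q + c * D"
    unfolding partial_def by (rule DERIV_imp_deriv)
  from Dd show "(\<lambda>s. F (q + s *\<^sub>R unitv k) + c * G (q + s *\<^sub>R unitv k)) differentiable (at 0)"
    using real_differentiable_def by blast
qed

definition psiF :: "(pt \<Rightarrow> real) \<Rightarrow> real \<Rightarrow> pt \<Rightarrow> pt \<Rightarrow> real" where
  "psiF phi c p0 = (\<lambda>q. phi q + c * quart p0 q)"

context
  fixes phi :: "pt \<Rightarrow> real" and c :: real and p0 :: pt
  assumes pr: "phireg phi"
begin

lemma PS1: "i < 4 \<Longrightarrow> partial i (psiF phi c p0) q = partial i phi q + c * pq1 p0 i q"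
  unfolding psiF_def by (rule partial_addc(1)[OF ph_sl[OF pr] quart_slice])

lemma PS1fun: "i < 4 \<Longrightarrow> partial i (psiF phi c p0) = (\<lambda>q. partial i phi q + c * pq1 p0 i q)"
  using PS1 by blast

lemma PS_sl: "i < 4 \<Longrightarrow> (\<lambda>s. psiF phi c p0 (q + s *\<^sub>R unitv i)) differentiable (at 0)"
  unfolding psiF_def using partial_addc(2)[OF ph_sl[OF pr] quart_slice] .

lemma PS2: "i < 4 \<Longrightarrow> j < 4 \<Longrightarrow>
   partial j (partial i (psiF phi c p0)) q = partial j (partial i phi) q + c * pq2 p0 j i q"
  unfolding PS1fun by (rule partial_addc(1)[OF ph_sl2[OF pr] pq1_slice])

lemma PS_sl2: "i < 4 \<Longrightarrow> j < 4 \<Longrightarrow> (\<lambda>s. partial i (psiF phi c p0) (q + s *\<^sub>R unitv j)) differentiable (at 0)"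
  unfolding PS1fun using partial_addc(2)[OF ph_sl2[OF pr] pq1_slice] by simp

lemma PS_c1: "i < 4 \<Longrightarrow> isCont (partial i (psiF phi c p0)) q"
  unfolding PS1fun using ph_c1[OF pr] isCont_pq1 by (intro continuous_intros) auto

lemma PS2fun: "i < 4 \<Longrightarrow> j < 4 \<Longrightarrow>
   partial j (partial i (psiF phi c p0)) = (\<lambda>q. partial j (partial i phi) q + c * pq2 p0 j i q)"
  using PS2 by blast

lemma PS_c2: "i < 4 \<Longrightarrow> j < 4 \<Longrightarrow> isCont (partial j (partial i (psiF phi c p0))) q"
  unfolding PS2fun using ph_c2[OF pr] isCont_pq2 by (intro continuous_intros) auto

lemma PS_regT: "regT (psiF phi c p0)"
  unfolding regT_def using PS_sl PS_sl2 PS_c1 PS_c2 by auto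

lemma PS_reg2: "reg2 (psiF phi c p0) q"
  unfolding reg2_def using PS_sl2 by auto

lemma PS_p0: "i < 4 \<Longrightarrow> partial i (psiF phi c p0) p0 = partial i phi p0"
  "i < 4 \<Longrightarrow> j < 4 \<Longrightarrow> partial j (partial i (psiF phi c p0)) p0 = partial j (partial i phi) p0"
  by (simp_all add: PS1 PS2 cmp_p0)

end



lemma isCont_th: "isCont th q"
  unfolding th_def[abs_def] by (intro continuous_intros)

definition ee :: "real \<Rightarrow> nat \<Rightarrow> real" where "ee e i = (if i = 3 then e else 1)"

lemma XX_ee:
  assumes "reg2 f q" "i \<in> {1,2,3}" "j \<in> {1,2,3}"
  shows "VFe e i (VFe e j f) q = ee e i * ee e j * VFe 1 i (VFe 1 j f) q"
  unfolding XX[OF assms] using assms(2,3)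
  by (auto simp: Bf_def Wv_def Rfo_def ee_def algebra_simps)

lemma isCont_BfR:
  assumes H: "\<And>k l. k < 3 \<Longrightarrow> l < 3 \<Longrightarrow> isCont (H k l) p0" and G: "isCont G0 p0" "isCont G1 p0"
    and ij: "i \<in> {1,2,3}" "j \<in> {1,2,3}"
  shows "isCont (\<lambda>q. Bf (\<lambda>k l. H k l q) e (th q) i j + Rfo (G0 q) (G1 q) e (th q) i j) p0"
proof -
  have HH: "isCont (H 0 0) p0" "isCont (H 0 1) p0" "isCont (H 0 2) p0"
     "isCont (H 1 0) p0" "isCont (H 1 1) p0" "isCont (H 1 2) p0"
     "isCont (H 2 0) p0" "isCont (H 2 1) p0" "isCont (H 2 2) p0"
     "isCont (H 0 (Suc 0)) p0" "isCont (H (Suc 0) 0) p0" "isCont (H (Suc 0) (Suc 0)) p0"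
     "isCont (H (Suc 0) 2) p0" "isCont (H 2 (Suc 0)) p0" by (simp_all add: H)
  show ?thesis
  using ij
  apply (simp only: insert_iff empty_iff)
  apply (elim disjE)
  apply (simp_all add: Bf_def Wv_def Rfo_def)
  apply (intro continuous_intros HH G isCont_th)+
  done
qed

context
  fixes phi :: "pt \<Rightarrow> real" and c :: real and p0 :: pt
  assumes pr: "phireg phi"
begin

lemma phi_reg2: "reg2 phi q"
  unfolding reg2_def using ph_sl2[OF pr] by auto

lemma Y_cont:
  assumes ij: "i \<in> {1,2,3}" "j \<in> {1,2,3}"
  shows "isCont (VFe 1 i (VFe 1 j (psiF phi c p0))) p0"
    and "VFe 1 i (VFe 1 j (psiF phi c p0)) p0 = VFe 1 i (VFe 1 j phi) p0"
proof -
  have e: "VFe 1 i (VFe 1 j (psiF phi c p0)) = (\<lambda>q. Bf (\<lambda>k l. partial k (partial l (psiF phi c p0)) q) 1 (th q) i j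
     + Rfo (partial 0 (psiF phi c p0) q) (partial 1 (psiF phi c p0) q) 1 (th q) i j)"
    using XX[OF PS_reg2[OF pr] ij] by blast
  have H: "isCont (partial k (partial l (psiF phi c p0))) p0" if "k < 3" "l < 3" for k l
    using PS_c2[OF pr] that by simp
  show "isCont (VFe 1 i (VFe 1 j (psiF phi c p0))) p0"
    unfolding e
    by (rule isCont_BfR[OF H _ _ ij]) (use PS_c1[OF pr] in auto)
  show "VFe 1 i (VFe 1 j (psiF phi c p0)) p0 = VFe 1 i (VFe 1 j phi) p0"
    unfolding e XX[OF phi_reg2 ij]
    by (simp add: Bf_def PS_p0[OF pr])
qed

end



lemma Acoef_bound:
  assumes tau: "tau > 0" and sg: "sg \<ge> 0" and ij: "i \<in> {1,2,3}" "j \<in> {1,2,3}"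
  shows "\<bar>Acoef tau sg P i j\<bar> \<le> 2 + sg"
proof -
  define N where "N = (\<Sum>k\<in>{1,2,3}. (P k)\<^sup>2) + tau"
  have N: "N = (P 1)\<^sup>2 + (P 2)\<^sup>2 + (P 3)\<^sup>2 + tau" by (simp add: N_def)
  have Npos: "N > 0" using tau unfolding N by (smt (verit) zero_le_power2)
  have Pi: "(P i)\<^sup>2 \<le> N - tau" and Pj: "(P j)\<^sup>2 \<le> N - tau" using ij unfolding N by auto
  have "2 * \<bar>P i * P j\<bar> \<le> (P i)\<^sup>2 + (P j)\<^sup>2"
    using sum_squares_bound[of "\<bar>P i\<bar>" "\<bar>P j\<bar>"] by (simp add: abs_mult power2_abs)
  also have "\<dots> \<le> 2 * N" using Pi Pj tau by linarith
  finally have "\<bar>P i * P j\<bar> \<le> N" by simp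
  then have X: "\<bar>P i * P j / N\<bar> \<le> 1" using Npos by (simp add: abs_divide divide_le_eq_1)
  have A: "Acoef tau sg P i j = kdelta i j - P i * P j / N + sg * kdelta i j"
    by (simp add: Acoef_def N_def)
  show ?thesis
  proof (cases "i = j")
    case True
    then have "Acoef tau sg P i j = 1 - P i * P j / N + sg" unfolding A kdelta_def by simp
    moreover have "- 1 \<le> P i * P j / N \<and> P i * P j / N \<le> 1" using X unfolding abs_le_iff by auto
    ultimately show ?thesis using sg by (simp only: abs_le_iff) linarith
  next
    case False
    then show ?thesis unfolding A kdelta_def using X sg by simp
  qed
qed

lemma Acoef_12:
  assumes tau: "tau > 0"
  shows "Acoef tau sg P i j = kdelta i j * (1 + sg) -
     (P i / sqrt ((P 1)\<^sup>2 + (P 2)\<^sup>2 + (P 3)\<^sup>2 + tau)) * (P j / sqrt ((P 1)\<^sup>2 + (P 2)\<^sup>2 + (P 3)\<^sup>2 + tau))"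
proof -
  define N where "N = (P 1)\<^sup>2 + (P 2)\<^sup>2 + (P 3)\<^sup>2 + tau"
  have Npos: "N > 0" using tau unfolding N_def by (smt (verit) zero_le_power2)
  have ss: "sqrt N * sqrt N = N" using Npos by simp
  have "(P i / sqrt N) * (P j / sqrt N) = P i * P j / (sqrt N * sqrt N)" by simp
  then have "(P i / sqrt N) * (P j / sqrt N) = P i * P j / N" unfolding ss .
  then show ?thesis unfolding N_def[symmetric] by (simp add: Acoef_def N_def kdelta_def algebra_simps)
qed

lemma deg_eq_mc:
  assumes g: "grad0_sq phi p \<noteq> 0"
    and q1: "q 1 = VF 1 phi p / sqrt (grad0_sq phi p)" and q2: "q 2 = VF 2 phi p / sqrt (grad0_sq phi p)"
  shows "deg_op q phi p = mc_op phi p"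
proof -
  have gpos: "grad0_sq phi p > 0" using g unfolding grad0_sq_def
    by (smt (verit) sum_power2_eq_zero_iff zero_le_power2)
  have qq: "q i * q j = VF i phi p * VF j phi p / grad0_sq phi p" if "i \<in> {1,2}" "j \<in> {1,2}" for i j
  proof -
    have a: "q i = VF i phi p / sqrt (grad0_sq phi p)" using that q1 q2 by auto
    have b: "q j = VF j phi p / sqrt (grad0_sq phi p)" using that q1 q2 by auto
    have ss: "sqrt (grad0_sq phi p) * sqrt (grad0_sq phi p) = grad0_sq phi p" using gpos by simp
    have "VF i phi p / sqrt (grad0_sq phi p) * (VF j phi p / sqrt (grad0_sq phi p))
        = VF i phi p * VF j phi p / (sqrt (grad0_sq phi p) * sqrt (grad0_sq phi p))" by simp
    then show ?thesis unfolding a b ss .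
  qed
  show ?thesis unfolding deg_op_def mc_op_def
    by (intro sum.cong refl) (simp add: qq)
qed



lemma limit_core:
  fixes phi :: "pt \<Rightarrow> real" and p0 :: pt and pk :: "nat \<Rightarrow> pt" and eps tau sg :: "nat \<Rightarrow> real"
  assumes pr: "phireg phi" and sgn: "s = 1 \<or> s = -1"
  and pk: "pk \<longlonglongrightarrow> p0"
  and eps0: "eps \<longlonglongrightarrow> 0" and tau0: "tau \<longlonglongrightarrow> 0" and sg0: "sg \<longlonglongrightarrow> 0"
  and taupos: "\<And>k. tau k > 0" and sgpos: "\<And>k. sg k \<ge> 0"
  and ineq: "eventually (\<lambda>k. s * partial 3 (psiF phi c p0) (pk k) \<le> s * (\<Sum>i\<in>{1,2,3}. \<Sum>j\<in>{1,2,3}.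
      Acoef (tau k) (sg k) (\<lambda>m. VFe (eps k) m (psiF phi c p0) (pk k)) i j *
      VFe (eps k) i (VFe (eps k) j (psiF phi c p0)) (pk k))) sequentially"
  shows "\<exists>q. sqrt ((q 1)\<^sup>2 + (q 2)\<^sup>2) \<le> 1 \<and> s * partial 3 phi p0 \<le> s * deg_op q phi p0 \<and>
     (grad0_sq phi p0 \<noteq> 0 \<longrightarrow> deg_op q phi p0 = mc_op phi p0)"
proof -
  define psi where "psi = psiF phi c p0"
  define Y where "Y i j k = VFe 1 i (VFe 1 j psi) (pk k)" for i j k
  define Yp where "Yp i j = VFe 1 i (VFe 1 j phi) p0" for i j
  have Ylim: "(Y i j) \<longlonglongrightarrow> Yp i j" if "i \<in> {1,2,3}" "j \<in> {1,2,3}" for i j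
    using isCont_tendsto_compose[OF Y_cont(1)[OF pr that] pk] Y_cont(2)[OF pr that]
    unfolding Y_def Yp_def psi_def by simp
  have VFc: "isCont (VF m psi) p0" for m
    unfolding psi_def VF_def using PS_c1[OF pr] isCont_th
    by (cases "m = 1"; cases "m = 2") (auto intro!: continuous_intros)
  have VFv: "VF m psi p0 = VF m phi p0" for m
    unfolding psi_def VF_def by (simp add: PS_p0[OF pr])
  define V where "V m k = VF m psi (pk k)" for m k
  have Vlim: "V m \<longlonglongrightarrow> VF m phi p0" for m
    using isCont_tendsto_compose[OF VFc pk] VFv unfolding V_def by simp
  define P where "P k m = VFe (eps k) m psi (pk k)" for k m
  have P123: "P k 1 = V 1 k" "P k 2 = V 2 k" "P k 3 = eps k * V 3 k" for k
    by (simp_all add: P_def V_def VFe_def)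
  define N where "N k = (P k 1)\<^sup>2 + (P k 2)\<^sup>2 + (P k 3)\<^sup>2 + tau k" for k
  have Npos: "N k > 0" for k unfolding N_def using taupos[of k] by (smt (verit) zero_le_power2)
  define Qv where "Qv k = (P k 1 / sqrt (N k), P k 2 / sqrt (N k))" for k
  have Qin: "Qv k \<in> cball 0 1" for k
  proof -
    have ss: "(sqrt (N k))\<^sup>2 = N k" using Npos[of k] by simp
    have "(P k 1 / sqrt (N k))\<^sup>2 + (P k 2 / sqrt (N k))\<^sup>2 = ((P k 1)\<^sup>2 + (P k 2)\<^sup>2) / N k"
      by (simp add: power_divide ss add_divide_distrib)
    also have "\<dots> \<le> 1" using Npos[of k] taupos[of k] unfolding N_def
      by (simp add: divide_le_eq_1)
    finally have "norm (Qv k) \<le> 1" unfolding Qv_def norm_Pair real_norm_def power2_abs by simp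
    then show ?thesis by simp
  qed
  obtain l r where l: "l \<in> cball 0 1" and r: "strict_mono r" and lr: "(Qv \<circ> r) \<longlonglongrightarrow> l"
    using seq_compactE[OF compact_imp_seq_compact[OF compact_cball], of Qv] Qin by metis
  define q where "q i = (if i = 1 then fst l else snd l)" for i :: nat
  have qn: "sqrt ((q 1)\<^sup>2 + (q 2)\<^sup>2) \<le> 1"
  proof -
    have "norm l = sqrt ((fst l)\<^sup>2 + (snd l)\<^sup>2)" by (cases l) (simp add: norm_Pair)
    then show ?thesis using l by (simp add: q_def)
  qed
  have Gform: "VFe (eps k) i (VFe (eps k) j psi) (pk k) = ee (eps k) i * ee (eps k) j * Y i j k"
    if "i \<in> {1,2,3}" "j \<in> {1,2,3}" for i j k
    unfolding Y_def psi_def by (rule XX_ee[OF PS_reg2[OF pr] that])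
  define T where "T i j k = Acoef (tau k) (sg k) (P k) i j * (ee (eps k) i * ee (eps k) j * Y i j k)" for i j k
  have Geq: "(\<Sum>i\<in>{1,2,3}. \<Sum>j\<in>{1,2,3}. Acoef (tau k) (sg k) (P k) i j * VFe (eps k) i (VFe (eps k) j psi) (pk k))
      = (\<Sum>i\<in>{1,2,3}. \<Sum>j\<in>{1,2,3}. T i j k)" for k
    by (intro sum.cong refl) (simp add: T_def Gform)
  have Tlim12: "(\<lambda>k. T i j (r k)) \<longlonglongrightarrow> (kdelta i j - q i * q j) * Yp i j"
    if ij: "i \<in> {1,2}" "j \<in> {1,2}" for i j
  proof -
    define Qc where "Qc (i::nat) k = (if i = 1 then fst (Qv k) else snd (Qv k))" for i k
    have TT: "T i j k = (kdelta i j * (1 + sg k) - Qc i k * Qc j k) * Y i j k" for k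
      unfolding T_def Acoef_12[OF taupos] using ij
      by (auto simp: ee_def Qc_def Qv_def N_def)
    have Qcl: "(\<lambda>k. Qc m (r k)) \<longlonglongrightarrow> q m" for m
      using tendsto_fst[OF lr] tendsto_snd[OF lr] by (auto simp: Qc_def q_def o_def)
    have sgr: "(\<lambda>k. sg (r k)) \<longlonglongrightarrow> 0" using LIMSEQ_subseq_LIMSEQ[OF sg0 r] by (simp add: o_def)
    have Yr: "(\<lambda>k. Y i j (r k)) \<longlonglongrightarrow> Yp i j" using LIMSEQ_subseq_LIMSEQ[OF Ylim r] ij by (auto simp: o_def)
    have "(\<lambda>k. (kdelta i j * (1 + sg (r k)) - Qc i (r k) * Qc j (r k)) * Y i j (r k)) \<longlonglongrightarrow>
          (kdelta i j * (1 + 0) - q i * q j) * Yp i j"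
      by (intro tendsto_intros sgr Qcl Yr)
    then show ?thesis unfolding TT by simp
  qed
  have Tlim3: "(\<lambda>k. T i j (r k)) \<longlonglongrightarrow> 0"
    if ij: "i \<in> {1,2,3}" "j \<in> {1,2,3}" and three: "i = 3 \<or> j = 3" for i j
  proof -
    have bnd: "norm (T i j k) \<le> \<bar>eps k\<bar> * ((2 + sg k) * ((1 + \<bar>eps k\<bar>) * \<bar>Y i j k\<bar>))" for k
    proof -
      have A: "\<bar>Acoef (tau k) (sg k) (P k) i j\<bar> \<le> 2 + sg k"
        by (rule Acoef_bound[OF taupos sgpos ij])
      have E: "\<bar>ee (eps k) i * ee (eps k) j\<bar> \<le> \<bar>eps k\<bar> * (1 + \<bar>eps k\<bar>)"
      proof -
        have e0: "0 \<le> \<bar>eps k\<bar>" by simp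
        have "i = 3 \<and> j = 3 \<or> i = 3 \<and> j \<noteq> 3 \<or> i \<noteq> 3 \<and> j = 3" using three by blast
        then show ?thesis
        proof (elim disjE conjE)
          assume "i = 3" "j = 3"
          then show ?thesis using e0 by (simp add: ee_def abs_mult distrib_left)
        next
          assume "i = 3" "j \<noteq> 3"
          then show ?thesis using e0 by (simp add: ee_def distrib_left)
        next
          assume "i \<noteq> 3" "j = 3"
          then show ?thesis using e0 by (simp add: ee_def distrib_left)
        qed
      qed
      have "norm (T i j k) = \<bar>Acoef (tau k) (sg k) (P k) i j\<bar> * (\<bar>ee (eps k) i * ee (eps k) j\<bar> * \<bar>Y i j k\<bar>)"
        by (simp add: T_def abs_mult)
      also have "\<dots> \<le> (2 + sg k) * ((\<bar>eps k\<bar> * (1 + \<bar>eps k\<bar>)) * \<bar>Y i j k\<bar>)"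
        using sgpos[of k] by (intro mult_mono[OF A mult_right_mono[OF E abs_ge_zero]]) auto
      also have "\<dots> = \<bar>eps k\<bar> * ((2 + sg k) * ((1 + \<bar>eps k\<bar>) * \<bar>Y i j k\<bar>))"
        by (simp only: mult_ac)
      finally show ?thesis .
    qed
    have Yl: "(\<lambda>k. Y i j k) \<longlonglongrightarrow> Yp i j" by (rule Ylim[OF ij])
    have "(\<lambda>k. \<bar>eps k\<bar> * ((2 + sg k) * ((1 + \<bar>eps k\<bar>) * \<bar>Y i j k\<bar>))) \<longlonglongrightarrow>
          \<bar>0\<bar> * ((2 + 0) * ((1 + \<bar>0\<bar>) * \<bar>Yp i j\<bar>))"
      by (rule tendsto_mult[OF tendsto_rabs[OF eps0] tendsto_mult[OF tendsto_add[OF tendsto_const sg0]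
          tendsto_mult[OF tendsto_add[OF tendsto_const tendsto_rabs[OF eps0]] tendsto_rabs[OF Yl]]]])
    then have lim0: "(\<lambda>k. \<bar>eps k\<bar> * ((2 + sg k) * ((1 + \<bar>eps k\<bar>) * \<bar>Y i j k\<bar>))) \<longlonglongrightarrow> 0"
      by simp
    have "(\<lambda>k. T i j k) \<longlonglongrightarrow> 0"
      by (rule Lim_null_comparison[OF always_eventually lim0]) (use bnd in blast)
    from LIMSEQ_subseq_LIMSEQ[OF this r] show ?thesis by (simp add: o_def)
  qed
  have Yp12: "Yp i j = VF i (VF j phi) p0" if "i \<in> {1,2}" "j \<in> {1,2}" for i j
    using that by (auto simp: Yp_def VFe_def)
  have degf: "deg_op q phi p0 = (kdelta 1 1 - q 1 * q 1) * Yp 1 1 + (kdelta 1 2 - q 1 * q 2) * Yp 1 2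
      + (kdelta 2 1 - q 2 * q 1) * Yp 2 1 + (kdelta 2 2 - q 2 * q 2) * Yp 2 2"
    unfolding deg_op_def by (simp add: Yp12)
  have Glim: "(\<lambda>k. \<Sum>i\<in>{1,2,3}. \<Sum>j\<in>{1,2,3}. T i j (r k)) \<longlonglongrightarrow> deg_op q phi p0"
  proof -
    have "(\<lambda>k. T 1 1 (r k) + T 1 2 (r k) + T 2 1 (r k) + T 2 2 (r k)
        + (T 1 3 (r k) + T 2 3 (r k) + T 3 1 (r k) + T 3 2 (r k) + T 3 3 (r k))) \<longlonglongrightarrow>
        (kdelta 1 1 - q 1 * q 1) * Yp 1 1 + (kdelta 1 2 - q 1 * q 2) * Yp 1 2
      + (kdelta 2 1 - q 2 * q 1) * Yp 2 1 + (kdelta 2 2 - q 2 * q 2) * Yp 2 2 + (0 + 0 + 0 + 0 + 0)"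
    proof -
      have a: "(\<lambda>k. T 1 1 (r k)) \<longlonglongrightarrow> (kdelta 1 1 - q 1 * q 1) * Yp 1 1" by (rule Tlim12) auto
      have b: "(\<lambda>k. T 1 2 (r k)) \<longlonglongrightarrow> (kdelta 1 2 - q 1 * q 2) * Yp 1 2" by (rule Tlim12) auto
      have c: "(\<lambda>k. T 2 1 (r k)) \<longlonglongrightarrow> (kdelta 2 1 - q 2 * q 1) * Yp 2 1" by (rule Tlim12) auto
      have d: "(\<lambda>k. T 2 2 (r k)) \<longlonglongrightarrow> (kdelta 2 2 - q 2 * q 2) * Yp 2 2" by (rule Tlim12) auto
      have e: "(\<lambda>k. T 1 3 (r k)) \<longlonglongrightarrow> 0" by (rule Tlim3) auto
      have f: "(\<lambda>k. T 2 3 (r k)) \<longlonglongrightarrow> 0" by (rule Tlim3) auto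
      have g: "(\<lambda>k. T 3 1 (r k)) \<longlonglongrightarrow> 0" by (rule Tlim3) auto
      have h: "(\<lambda>k. T 3 2 (r k)) \<longlonglongrightarrow> 0" by (rule Tlim3) auto
      have i: "(\<lambda>k. T 3 3 (r k)) \<longlonglongrightarrow> 0" by (rule Tlim3) auto
      show ?thesis
        by (rule tendsto_add[OF tendsto_add[OF tendsto_add[OF tendsto_add[OF a b] c] d]
              tendsto_add[OF tendsto_add[OF tendsto_add[OF tendsto_add[OF e f] g] h] i]])
    qed
    moreover have "(\<lambda>k. \<Sum>i\<in>{1,2,3}. \<Sum>j\<in>{1,2,3}. T i j (r k)) = (\<lambda>k. T 1 1 (r k) + T 1 2 (r k) + T 2 1 (r k) + T 2 2 (r k)
        + (T 1 3 (r k) + T 2 3 (r k) + T 3 1 (r k) + T 3 2 (r k) + T 3 3 (r k)))"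
      by (simp add: fun_eq_iff algebra_simps)
    ultimately show ?thesis unfolding degf by simp
  qed
  have t3: "(\<lambda>k. partial 3 psi (pk (r k))) \<longlonglongrightarrow> partial 3 phi p0"
  proof -
    have "(\<lambda>k. partial 3 psi (pk k)) \<longlonglongrightarrow> partial 3 psi p0"
      using isCont_tendsto_compose[OF PS_c1[OF pr] pk] unfolding psi_def by simp
    from LIMSEQ_subseq_LIMSEQ[OF this r] show ?thesis
      using PS_p0(1)[OF pr, of 3] unfolding psi_def by (simp add: o_def)
  qed
  have ev: "eventually (\<lambda>k. s * partial 3 psi (pk (r k)) \<le> s * (\<Sum>i\<in>{1,2,3}. \<Sum>j\<in>{1,2,3}. T i j (r k))) sequentially"
  proof -
    from ineq obtain N0 where N0: "\<And>k. k \<ge> N0 \<Longrightarrow> s * partial 3 psi (pk k) \<le>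
        s * (\<Sum>i\<in>{1,2,3}. \<Sum>j\<in>{1,2,3}. T i j k)"
      unfolding eventually_sequentially Geq[symmetric] P_def psi_def by blast
    show ?thesis unfolding eventually_sequentially
      using N0 seq_suble[OF r] by (meson le_trans)
  qed
  have main: "s * partial 3 phi p0 \<le> s * deg_op q phi p0"
  proof (rule tendsto_le[OF trivial_limit_sequentially _ _ ev])
    show "(\<lambda>k. s * (\<Sum>i\<in>{1,2,3}. \<Sum>j\<in>{1,2,3}. T i j (r k))) \<longlonglongrightarrow> s * deg_op q phi p0"
      by (rule tendsto_mult_left[OF Glim])
    show "(\<lambda>k. s * partial 3 psi (pk (r k))) \<longlonglongrightarrow> s * partial 3 phi p0"
      by (rule tendsto_mult_left[OF t3])
  qed
  have nondeg: "deg_op q phi p0 = mc_op phi p0" if g: "grad0_sq phi p0 \<noteq> 0"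
  proof -
    define gg where "gg = grad0_sq phi p0"
    have gpos: "gg > 0" using g unfolding gg_def grad0_sq_def
      by (smt (verit) sum_power2_eq_zero_iff zero_le_power2)
    have Nl: "N \<longlonglongrightarrow> (VF 1 phi p0)\<^sup>2 + (VF 2 phi p0)\<^sup>2 + (0 * VF 3 phi p0)\<^sup>2 + 0"
    proof -
      have v1: "V 1 \<longlonglongrightarrow> VF 1 phi p0" and v2: "V 2 \<longlonglongrightarrow> VF 2 phi p0" and v3: "V 3 \<longlonglongrightarrow> VF 3 phi p0"
        by (rule Vlim)+
      have "(\<lambda>k. (V 1 k)\<^sup>2 + (V 2 k)\<^sup>2 + (eps k * V 3 k)\<^sup>2 + tau k) \<longlonglongrightarrow>
          (VF 1 phi p0)\<^sup>2 + (VF 2 phi p0)\<^sup>2 + (0 * VF 3 phi p0)\<^sup>2 + 0"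
        by (rule tendsto_add[OF tendsto_add[OF tendsto_add[OF tendsto_power[OF v1] tendsto_power[OF v2]]
              tendsto_power[OF tendsto_mult[OF eps0 v3]]] tau0])
      then show ?thesis unfolding N_def[abs_def] P123 .
    qed
    then have Nl': "N \<longlonglongrightarrow> gg" by (simp add: gg_def grad0_sq_def)
    have Ql: "Qv \<longlonglongrightarrow> (VF 1 phi p0 / sqrt gg, VF 2 phi p0 / sqrt gg)"
    proof -
      have v1: "V 1 \<longlonglongrightarrow> VF 1 phi p0" and v2: "V 2 \<longlonglongrightarrow> VF 2 phi p0" by (rule Vlim)+
      have sq: "(\<lambda>k. sqrt (N k)) \<longlonglongrightarrow> sqrt gg" by (rule tendsto_real_sqrt[OF Nl'])
      have nz: "sqrt gg \<noteq> 0" using gpos by simp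
      show ?thesis unfolding Qv_def[abs_def] P123
        by (rule tendsto_Pair[OF tendsto_divide[OF v1 sq nz] tendsto_divide[OF v2 sq nz]])
    qed
    have "l = (VF 1 phi p0 / sqrt gg, VF 2 phi p0 / sqrt gg)"
      using LIMSEQ_unique[OF lr LIMSEQ_subseq_LIMSEQ[OF Ql r]] .
    then show ?thesis
      by (intro deg_eq_mc g) (auto simp: q_def gg_def)
  qed
  show ?thesis using qn main nondeg by blast
qed



lemma ns_dist: "ns p q = (dist q p)\<^sup>2"
proof -
  obtain a b c d where q: "q = (a,b,c,d)" by (cases q)
  obtain a' b' c' d' where p: "p = (a',b',c',d')" by (cases p)
  have "0 \<le> (a - a')\<^sup>2 + (b - b')\<^sup>2 + (c - c')\<^sup>2 + (d - d')\<^sup>2" by simp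
  then show ?thesis unfolding q p dist4 by (simp add: ns_def cmp_def)
qed

lemma quart_dist: "quart p q = (dist q p) ^ 4"
  unfolding quart_def ns_dist by simp

lemma cont_quart: "continuous_on UNIV (quart p)"
  unfolding quart_def[abs_def] using cont_ns by (intro continuous_intros)

lemma visc_core:
  fixes eps tau sg :: "nat \<Rightarrow> real" and U :: "nat \<Rightarrow> pt \<Rightarrow> real" and u phi :: "pt \<Rightarrow> real"
  assumes pos: "\<forall>k. eps k > 0 \<and> tau k > 0 \<and> sg k > 0"
  and eps0: "eps \<longlonglongrightarrow> 0" and tau0: "tau \<longlonglongrightarrow> 0" and sg0: "sg \<longlonglongrightarrow> 0"
  and rs: "\<And>k. reg_solution (eps k) (tau k) (sg k) u0 (U k)"
  and ul: "\<And>K. compact K \<Longrightarrow> K \<subseteq> {p. tc p \<ge> 0} \<Longrightarrow> uniform_limit K U u sequentially"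
  and sgn: "s = 1 \<or> s = -1"
  and tp: "tc p > 0" and sm: "smooth_fun phi" and rpos: "r > 0"
  and loc: "\<forall>q. dist q p < r \<and> tc q > 0 \<longrightarrow> s * (u q - phi q) \<le> s * (u p - phi p)"
  shows "\<exists>q. sqrt ((q 1)\<^sup>2 + (q 2)\<^sup>2) \<le> 1 \<and> s * partial 3 phi p \<le> s * deg_op q phi p \<and>
     (grad0_sq phi p \<noteq> 0 \<longrightarrow> deg_op q phi p = mc_op phi p)"
proof -
  have pr: "phireg phi" using smooth_phireg[OF sm] .
  have ss: "s * s = 1" using sgn by auto
  have sabs: "\<bar>s\<bar> = 1" using sgn by auto
  define \<rho> where "\<rho> = min r (tc p) / 2"
  have rho: "\<rho> > 0" "\<rho> < r" "2 * \<rho> \<le> tc p" using rpos tp by (auto simp: \<rho>_def)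
  define K where "K = cball p \<rho>"
  have Kc: "compact K" unfolding K_def by simp
  have KT: "tc q > 0" if "q \<in> K" for q
    using that tc_dist[of q p] rho unfolding K_def by (simp add: dist_commute)
  have Kr: "dist q p < r" if "q \<in> K" for q
    using that rho unfolding K_def by (simp add: dist_commute)
  have KT0: "K \<subseteq> {q. tc q \<ge> 0}" using KT by fastforce
  have ulK: "uniform_limit K U u sequentially" using ul[OF Kc KT0] .
  define psi where "psi = psiF phi s p"
  define g where "g k q = s * (U k q - phi q) - quart p q" for k q
  have gpsi: "s * (U k q - psi q) = g k q" for k q
    unfolding psi_def psiF_def g_def using ss by (simp add: algebra_simps)
  have phic: "continuous_on UNIV phi" using cp1(2)[OF ph1[OF pr, of 0]] by simp
  have Uc: "continuous_on K (U k)" for k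
    using rs[of k] KT0 unfolding reg_solution_def by (blast intro: continuous_on_subset)
  have gc: "continuous_on K (g k)" for k
    unfolding g_def using Uc[of k] continuous_on_subset[OF phic] continuous_on_subset[OF cont_quart]
    by (intro continuous_intros) auto
  have "\<exists>x\<in>K. \<forall>y\<in>K. g k y \<le> g k x" for k
    using continuous_attains_sup[OF Kc _ gc] rho unfolding K_def by auto
  then obtain pk where pkK: "\<And>k. pk k \<in> K" and pkmax: "\<And>k y. y \<in> K \<Longrightarrow> g k y \<le> g k (pk k)"
    by metis
  have pK: "p \<in> K" using rho unfolding K_def by simp
  have pkl: "pk \<longlonglongrightarrow> p"
  proof (rule tendstoI)
    fix \<epsilon> :: real assume e: "\<epsilon> > 0"
    define e where "e = \<epsilon> ^ 4 / 4"
    have epos: "e > 0" using e by (simp add: e_def)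
    have "\<forall>\<^sub>F k in sequentially. \<forall>x\<in>K. dist (U k x) (u x) < e"
      using ulK epos unfolding uniform_limit_iff by blast
    then show "\<forall>\<^sub>F k in sequentially. dist (pk k) p < \<epsilon>"
    proof eventually_elim
      case (elim k)
      have a: "\<bar>U k p - u p\<bar> < e" using elim pK by (simp add: dist_real_def)
      have b: "\<bar>U k (pk k) - u (pk k)\<bar> < e" using elim pkK by (simp add: dist_real_def)
      have c: "s * (u (pk k) - phi (pk k)) \<le> s * (u p - phi p)"
        using loc Kr[OF pkK] KT[OF pkK] by blast
      have d: "g k p \<le> g k (pk k)" using pkmax[OF pK] .
      have gp: "g k p = s * (U k p - phi p)" by (simp add: g_def quart_dist)
      have e1: "s * (U k p - phi p) \<ge> s * (u p - phi p) - e"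
      proof -
        have "\<bar>s * (U k p - u p)\<bar> < e" using a sabs by (simp add: abs_mult)
        then show ?thesis by (simp add: algebra_simps abs_less_iff)
      qed
      have e2: "s * (U k (pk k) - phi (pk k)) \<le> s * (u (pk k) - phi (pk k)) + e"
      proof -
        have "\<bar>s * (U k (pk k) - u (pk k))\<bar> < e" using b sabs by (simp add: abs_mult)
        then show ?thesis by (simp add: algebra_simps abs_less_iff)
      qed
      have "quart p (pk k) \<le> 2 * e"
        using d gp e1 e2 c unfolding g_def by linarith
      then have "(dist (pk k) p) ^ 4 \<le> 2 * e" by (simp add: quart_dist)
      also have "\<dots> < \<epsilon> ^ 4" using e by (simp add: e_def)
      finally have "(dist (pk k) p) ^ 4 < \<epsilon> ^ 4" .
      then show "dist (pk k) p < \<epsilon>"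
        using power_less_imp_less_base[of "dist (pk k) p" 4 \<epsilon>] e by simp
    qed
  qed
  have ineq: "eventually (\<lambda>k. s * partial 3 psi (pk k) \<le> s * (\<Sum>i\<in>{1,2,3}. \<Sum>j\<in>{1,2,3}.
      Acoef (tau k) (sg k) (\<lambda>m. VFe (eps k) m psi (pk k)) i j *
      VFe (eps k) i (VFe (eps k) j psi) (pk k))) sequentially"
  proof -
    have "eventually (\<lambda>k. dist (pk k) p < \<rho> / 2) sequentially"
      using tendstoD[OF pkl, of "\<rho>/2"] rho by simp
    then show ?thesis
    proof eventually_elim
      case (elim k)
      have dle: "\<rho> / 2 \<le> tc (pk k)"
        using tc_dist[of "pk k" p] elim rho by linarith
      have rsk: "reg_solution (eps k) (tau k) (sg k) u0 (U k)" by (rule rs)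
      have maxU: "s * (U k q - psi q) \<le> s * (U k (pk k) - psi (pk k))" if "dist q (pk k) < \<rho> / 2" for q
      proof -
        have "dist q p \<le> dist q (pk k) + dist (pk k) p" by (rule dist_triangle)
        then have "q \<in> K" using that elim unfolding K_def by (simp add: dist_commute)
        then show ?thesis unfolding gpsi using pkmax by blast
      qed
      have pde: "partial 3 (U k) (pk k) = (\<Sum>i\<in>{1,2,3}. \<Sum>j\<in>{1,2,3}.
          Acoef (tau k) (sg k) (\<lambda>m. VFe (eps k) m (U k) (pk k)) i j * VFe (eps k) i (VFe (eps k) j (U k)) (pk k))"
        using rsk KT[OF pkK] unfolding reg_solution_def by blast
      have C: "C21_on {q. tc q > 0} (U k)" using rsk unfolding reg_solution_def by blast
      show ?case
        using touch[of "tau k" "sg k" "\<rho>/2" "pk k" s "U k" psi "eps k", OF _ _ _ dle sgn maxU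
          regT_C21[OF C] _ pde] pos rho
        unfolding psi_def using PS_regT[OF pr] by (auto simp: less_imp_le)
    qed
  qed
  show ?thesis
    by (rule limit_core[OF pr sgn pkl eps0 tau0 sg0, where c = s])
       (use pos ineq[unfolded psi_def] in \<open>auto simp: less_imp_le\<close>)
qed



theorem mainTheorem4:
  fixes u0 :: "real \<times> real \<times> real \<Rightarrow> real" and u :: "pt \<Rightarrow> real"
  assumes u0_cont: "continuous_on UNIV u0"
    and u0_per: "\<forall>x y z. u0 (x, y, z + 2 * pi) = u0 (x, y, z)"
    and u0_const: "\<exists>S>0. \<exists>c. \<forall>x y z. x\<^sup>2 + y\<^sup>2 \<ge> S \<longrightarrow> u0 (x, y, z) = c"
    and u_lip: "\<exists>L. L-lipschitz_on {p. tc p \<ge> 0} u"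
    and u_vv: "vanishing_viscosity_solution u0 u"
  shows "viscosity_solution u \<and> (\<forall>x y z. u (x, y, z, 0) = u0 (x, y, z))"
proof -
  obtain eps tau sg :: "nat \<Rightarrow> real" and U :: "nat \<Rightarrow> pt \<Rightarrow> real" where
    pos: "\<forall>k. eps k > 0 \<and> tau k > 0 \<and> sg k > 0" and
    eps0: "eps \<longlonglongrightarrow> 0" and tau0: "tau \<longlonglongrightarrow> 0" and sg0: "sg \<longlonglongrightarrow> 0" and
    rs: "\<forall>k. reg_solution (eps k) (tau k) (sg k) u0 (U k)" and
    ul: "\<forall>K. compact K \<and> K \<subseteq> {p. tc p \<ge> 0} \<longrightarrow> uniform_limit K U u sequentially"
    using u_vv unfolding vanishing_viscosity_solution_def by blast
  have init: "u (x, y, z, 0) = u0 (x, y, z)" for x y z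
  proof -
    have c1: "compact {(x, y, z, 0::real)}" by simp
    have c2: "{(x, y, z, 0::real)} \<subseteq> {p. tc p \<ge> 0}" by simp
    have "uniform_limit {(x, y, z, 0)} U u sequentially" using ul c1 c2 by blast
    from tendsto_uniform_limitI[OF this] have "(\<lambda>k. U k (x, y, z, 0)) \<longlonglongrightarrow> u (x, y, z, 0)" by simp
    moreover have "U k (x, y, z, 0) = u0 (x, y, z)" for k using rs unfolding reg_solution_def by blast
    ultimately have "(\<lambda>k. u0 (x, y, z)) \<longlonglongrightarrow> u (x, y, z, 0)" by simp
    then show ?thesis using LIMSEQ_unique[OF _ tendsto_const] by metis
  qed
  have cont: "continuous_on {p. tc p \<ge> 0} u"
    using u_lip lipschitz_on_continuous_on by blast
  have core: "\<exists>q. sqrt ((q 1)\<^sup>2 + (q 2)\<^sup>2) \<le> 1 \<and> s * partial 3 phi p \<le> s * deg_op q phi p \<and>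
     (grad0_sq phi p \<noteq> 0 \<longrightarrow> deg_op q phi p = mc_op phi p)"
    if "s = 1 \<or> s = -1" "tc p > 0" "smooth_fun phi" "r > 0"
      "\<forall>q. dist q p < r \<and> tc q > 0 \<longrightarrow> s * (u q - phi q) \<le> s * (u p - phi p)" for s p phi r
    by (rule visc_core[OF pos eps0 tau0 sg0 _ _ that]) (use rs ul in auto)
  have sub: "viscosity_subsolution u"
    unfolding viscosity_subsolution_def
  proof (rule conjI[OF cont], intro allI impI)
    fix p phi assume a: "0 < tc p \<and> smooth_fun phi \<and>
      (\<exists>r>0. \<forall>q. dist q p < r \<and> 0 < tc q \<longrightarrow> u q - phi q \<le> u p - phi p)"
    then obtain r where r: "r > 0" "\<forall>q. dist q p < r \<and> 0 < tc q \<longrightarrow> u q - phi q \<le> u p - phi p" by blast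
    obtain q where q: "sqrt ((q 1)\<^sup>2 + (q 2)\<^sup>2) \<le> 1" "1 * partial 3 phi p \<le> 1 * deg_op q phi p"
      "grad0_sq phi p \<noteq> 0 \<longrightarrow> deg_op q phi p = mc_op phi p"
      using core[of 1 p phi r] a r by auto
    show "(grad0_sq phi p \<noteq> 0 \<longrightarrow> partial 3 phi p \<le> mc_op phi p) \<and>
      (grad0_sq phi p = 0 \<longrightarrow> (\<exists>q. sqrt ((q 1)\<^sup>2 + (q 2)\<^sup>2) \<le> 1 \<and> partial 3 phi p \<le> deg_op q phi p))"
      using q by auto
  qed
  have super: "viscosity_supersolution u"
    unfolding viscosity_supersolution_def
  proof (rule conjI[OF cont], intro allI impI)
    fix p phi assume a: "0 < tc p \<and> smooth_fun phi \<and>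
      (\<exists>r>0. \<forall>q. dist q p < r \<and> 0 < tc q \<longrightarrow> u p - phi p \<le> u q - phi q)"
    then obtain r where r: "r > 0" "\<forall>q. dist q p < r \<and> 0 < tc q \<longrightarrow> u p - phi p \<le> u q - phi q" by blast
    have r': "\<forall>q. dist q p < r \<and> tc q > 0 \<longrightarrow> (-1) * (u q - phi q) \<le> (-1) * (u p - phi p)"
    proof (intro allI impI)
      fix q assume "dist q p < r \<and> tc q > 0"
      then have "u p - phi p \<le> u q - phi q" using r(2) by blast
      then show "(-1) * (u q - phi q) \<le> (-1) * (u p - phi p)" by simp
    qed
    obtain q where q: "sqrt ((q 1)\<^sup>2 + (q 2)\<^sup>2) \<le> 1" "(-1) * partial 3 phi p \<le> (-1) * deg_op q phi p"
      "grad0_sq phi p \<noteq> 0 \<longrightarrow> deg_op q phi p = mc_op phi p"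
      using core[of "-1" p phi r] a r(1) r' by auto
    show "(grad0_sq phi p \<noteq> 0 \<longrightarrow> partial 3 phi p \<ge> mc_op phi p) \<and>
      (grad0_sq phi p = 0 \<longrightarrow> (\<exists>q. sqrt ((q 1)\<^sup>2 + (q 2)\<^sup>2) \<le> 1 \<and> partial 3 phi p \<ge> deg_op q phi p))"
      using q by auto
  qed
  show ?thesis using sub super init unfolding viscosity_solution_def by blast
qed


end
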